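(* Assume the standing hypotheses (K), (F), (h), ($\theta$) of the context. Then: (1) There is $\varepsilon_0>0$ such that $\mathbf r\mapsto\mathcal F_{2\varepsilon}(\mathbf r)=F_1(r_1)+F_2(r_2)+2\varepsilon h(\mathbf r)$ is convex on $[0,\infty)^2$ for every $0<\varepsilon\le\varepsilon_0$, strictly convex if $\varepsilon<\varepsilon_0$. (2) For all $\mathbf r\in[0,\infty)^2$ and $0<\varepsilon\le\varepsilon_0$: $\tfrac12F_1(r_1)+\tfrac12F_2(r_2)\le\mathcal F_\varepsilon(\mathbf r)\le(1+\tfrac\varepsilon2\kappa_{1,1})F_1(r_1)+(1+\tfrac\varepsilon2\kappa_{2,2})F_2(r_2)$. (3) For $0\le r\le r_0$ and $j=1,2$: $\frac{m_j}{\beta_j+1}r^{\beta_j+1}\le F_j'(r)\le\frac{M_j}{\beta_j+1}r^{\beta_j+1}$ and $\frac{m_j}{(\beta_j+1)(\beta_j+2)}r^{\beta_j+2}\le F_j(r)\le\frac{M_j}{(\beta_j+1)(\beta_j+2)}r^{\beta_j+2}$. (4) For $j=1,2$ there are constants $\alpha_j$ such that $F_j'(r)\le\alpha_j(\min\{1,r\}+F_j(r))$ for all $r\ge0$. (5) For every $H>0$ there is $\beta_H>0$ such that for all $\bar{\mathbf r}\in[0,\infty)^2$ with $\bar r_1,\bar r_2\le H$, all $\mathbf r\in[0,\infty)^2$ and all $i,j\in\{1,2\}$, \[\max\{r_1,r_2\}\,|\theta_{j,i}(\mathbf u)-\theta_{j,i}(\bar{\mathbf u})|^2\le\beta_H\big(\mathrm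 d_{F_1}(r_1|\bar r_1)+\mathrm d_{F_2}(r_2|\bar r_2)\big),\] where $\mathbf u=(F_1'(r_1),F_2'(r_2))$, $\bar{\mathbf u}=(F_1'(\bar r_1),F_2'(\bar r_2))$ and $\mathrm d_F(r|\bar r):=F(r)-F(\bar r)-F'(\bar r)(r-\bar r)$ is the Bregman divergence of a convex function $F$.
   Context: Let $d\ge1$. Standing hypotheses. (K): $K:\mathbb R^d\to[0,\infty)$ is radially symmetric, $K(0)=0$, $K\in C^2$, $\nabla^2K\ge\lambda\,\mathrm{Id}$ for some $\lambda>0$, $\|\nabla^2K\|\le C_K$. (F): for $j=1,2$, $F_j:[0,\infty)\to[0,\infty)$ is $C^2$ with $F_j''(r)>0$ for $r>0$, $F_j(0)=F_j'(0)=0$, $\liminf_{r\to\infty}F_j''(r)>0$, $\limsup_{r\to\infty}F_j'(r)/F_j(r)<\infty$; there are $m_j,M_j>0$, $\beta_j\ge0$, $r_0>0$ with $m_jr^{\beta_j}\le F_j''(r)\le M_jr^{\beta_j}$ for $0\le r\le r_0$; and $F_j(r)-rF_j'(r)+r^2F_j''(r)\ge0$ for all $r\ge0$. (h): $h:[0,\infty)^2\to\mathbb R$ is $C^2$, and $h$ and $\partial_{r_1}h,\partial_{r_2}h$ vanish on $\{r_1=0\}\cup\{r_2=0\}$. Define for $\mathbf u\in[0,\infty)^2$: $\theta_j(\mathbf u):=\partial_{r_j}h((F_1')^{-1}(u_1),(F_2')^{-1}(u_2))$ and $\theta_{j,i}:=\partial_{u_i}\theta_j$, so $\theta_{j,i}(\mathbf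 u)=\partial_{r_i}\partial_{r_j}h(\mathbf r)/F_i''(r_i)$ with $r_k=(F_k')^{-1}(u_k)$. ($\theta$): each $\theta_{j,i}$ is locally Lipschitz on $[0,\infty)^2$, and there are $\kappa_{j,i}>0$ with $|\theta_{j,i}(\mathbf u)|\le\kappa_{j,i}\min\{1,u_1,u_2,\sqrt{(F_i')^{-1}(u_i)/(F_j')^{-1}(u_j)}\}$ for all $\mathbf u$. Notation: for $\varepsilon\ge0$, $\mathcal F_\varepsilon(\mathbf r):=F_1(r_1)+F_2(r_2)+\varepsilon h(\mathbf r)$. *)

theory Defs
  imports "HOL-Analysis.Analysis"
begin

definition quad :: "(real \<times> real) set" where
  "quad = {0..} \<times> {0..}"

definition strict_convex_on :: "'a::real_vector set \<Rightarrow> ('a \<Rightarrow> real) \<Rightarrow> bool" where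
  "strict_convex_on S f \<longleftrightarrow> convex S \<and>
     (\<forall>x\<in>S. \<forall>y\<in>S. \<forall>t::real. x \<noteq> y \<and> 0 < t \<and> t < 1 \<longrightarrow>
        f ((1 - t) *\<^sub>R x + t *\<^sub>R y) < (1 - t) * f x + t * f y)"

text \<open>Power r^b for r \<ge> 0, b \<ge> 0, with the convention 0^0 = 1
  (Isabelle's powr has 0 powr 0 = 0).\<close>
definition rpow :: "real \<Rightarrow> real \<Rightarrow> real" where
  "rpow r b = (if b = 0 then 1 else r powr b)"

definition coord :: "nat \<Rightarrow> real \<times> real \<Rightarrow> real" where
  "coord i u = (if i = 1 then fst u else snd u)"

definition upd_coord :: "nat \<Rightarrow> real \<times> real \<Rightarrow> real \<Rightarrow> real \<times> real" where
  "upd_coord i u t = (if i = 1 then (t, snd u) else (fst u, t))"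

text \<open>theta_j(u) = (partial_{r_j} h)((F_1')^{-1}(u_1), (F_2')^{-1}(u_2)), where dh j is
  partial_{r_j} h and Fd k is F_k'; the inverse is taken on [0,oo).\<close>
definition theta :: "(nat \<Rightarrow> real \<times> real \<Rightarrow> real) \<Rightarrow> (nat \<Rightarrow> real \<Rightarrow> real) \<Rightarrow> nat
    \<Rightarrow> real \<times> real \<Rightarrow> real" where
  "theta dh Fd j u = dh j (inv_into {0..} (Fd 1) (fst u), inv_into {0..} (Fd 2) (snd u))"

definition bregman :: "(real \<Rightarrow> real) \<Rightarrow> (real \<Rightarrow> real) \<Rightarrow> real \<Rightarrow> real \<Rightarrow> real" where
  "bregman F Fd r rb = F r - F rb - Fd rb * (r - rb)"

end

theory Submission
  imports Defs "HOL-Analysis.Analysis"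
begin


lemma deriv_at_of_within0:
  assumes "x > 0" "(f has_real_derivative D) (at x within {0..})"
  shows "(f has_real_derivative D) (at x)"
proof -
  have "x \<in> interior {0::real..}" using assms(1) by simp
  then show ?thesis using assms(2) at_within_interior by metis
qed

lemma cont_of_deriv0:
  assumes "\<forall>x\<ge>0. (f has_real_derivative f' x) (at x within {0..})"
  shows "continuous_on {0..} f"
  using assms by (metis DERIV_continuous atLeast_iff continuous_on_eq_continuous_within)

lemma mono0:
  fixes f :: "real \<Rightarrow> real"
  assumes d: "\<forall>x\<ge>0. (f has_real_derivative f' x) (at x within {0..})"
    and "0 \<le> a" "a \<le> b" and nn: "\<forall>x. a < x \<and> x < b \<longrightarrow> f' x \<ge> 0"
  shows "f a \<le> f b"
proof (rule DERIV_nonneg_imp_increasing_open[OF \<open>a \<le> b\<close>])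
  fix x assume "a < x" "x < b"
  then show "\<exists>y. (f has_real_derivative y) (at x) \<and> 0 \<le> y"
  proof (intro exI conjI)
    have "0 < x" using \<open>a < x\<close> \<open>0 \<le> a\<close> by linarith
    then show "(f has_real_derivative f' x) (at x)" using d deriv_at_of_within0 by auto
    show "0 \<le> f' x" using nn \<open>a < x\<close> \<open>x < b\<close> by auto
  qed
next
  show "continuous_on {a..b} f"
    by (rule continuous_on_subset[OF cont_of_deriv0[OF d]]) (use \<open>0 \<le> a\<close> in auto)
qed

lemma antimono0:
  fixes f :: "real \<Rightarrow> real"
  assumes d: "\<forall>x\<ge>0. (f has_real_derivative f' x) (at x within {0..})"
    and "0 \<le> a" "a \<le> b" and nn: "\<forall>x. a < x \<and> x < b \<longrightarrow> f' x \<le> 0"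
  shows "f b \<le> f a"
proof -
  have "\<forall>x\<ge>0. ((\<lambda>x. - f x) has_real_derivative - f' x) (at x within {0..})"
    using d DERIV_minus by blast
  from mono0[OF this assms(2,3)] nn show ?thesis by auto
qed

lemma chord:
  fixes \<phi> \<phi>' :: "real \<Rightarrow> real"
  assumes c: "continuous_on {0..1} \<phi>"
    and d: "\<forall>t. 0 < t \<and> t < 1 \<longrightarrow> (\<phi> has_real_derivative \<phi>' t) (at t)"
    and m: "\<forall>a b. 0 < a \<and> a \<le> b \<and> b < 1 \<longrightarrow> \<phi>' a \<le> \<phi>' b"
    and t: "0 \<le> t" "t \<le> 1"
  shows "\<phi> t \<le> (1 - t) * \<phi> 0 + t * \<phi> 1"
proof (cases "t = 0 \<or> t = 1")
  case True then show ?thesis by auto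
next
  case False
  then have t': "0 < t" "t < 1" using t by auto
  obtain l1 z1 where z1: "0 < z1" "z1 < t" "DERIV \<phi> z1 :> l1" "\<phi> t - \<phi> 0 = (t - 0) * l1"
  proof -
    have "continuous_on {0..t} \<phi>" by (rule continuous_on_subset[OF c]) (use t' in auto)
    moreover have "\<phi> differentiable (at x)" if "0 < x" "x < t" for x
    proof -
      have "0 < x" "x < 1" using that t' by linarith+
      then show ?thesis using d by (auto simp: real_differentiable_def)
    qed
    ultimately have "\<exists>l z. 0 < z \<and> z < t \<and> DERIV \<phi> z :> l \<and> \<phi> t - \<phi> 0 = (t - 0) * l"
      using MVT[of 0 t \<phi>] t' by auto
    then show ?thesis using that by blast
  qed
  obtain l2 z2 where z2: "t < z2" "z2 < 1" "DERIV \<phi> z2 :> l2" "\<phi> 1 - \<phi> t = (1 - t) * l2"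
  proof -
    have "continuous_on {t..1} \<phi>" by (rule continuous_on_subset[OF c]) (use t in auto)
    moreover have "\<phi> differentiable (at x)" if "t < x" "x < 1" for x
    proof -
      have "0 < x" "x < 1" using that t' by linarith+
      then show ?thesis using d by (auto simp: real_differentiable_def)
    qed
    ultimately have "\<exists>l z. t < z \<and> z < 1 \<and> DERIV \<phi> z :> l \<and> \<phi> 1 - \<phi> t = (1 - t) * l"
      using MVT[of t 1 \<phi>] t' by auto
    then show ?thesis using that by blast
  qed
  have "0 < z1" "z1 < 1" using z1 t' by linarith+
  then have "DERIV \<phi> z1 :> \<phi>' z1" using d by blast
  then have e1: "l1 = \<phi>' z1" using z1(3) DERIV_unique by blast
  have "0 < z2" "z2 < 1" using z2 t' by linarith+
  then have "DERIV \<phi> z2 :> \<phi>' z2" using d by blast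
  then have e2: "l2 = \<phi>' z2" using z2(3) DERIV_unique by blast
  have "l1 \<le> l2" using m \<open>0 < z1\<close> \<open>z2 < 1\<close> z1(2) z2(1) unfolding e1 e2 by auto
  then have "t * (1 - t) * l1 \<le> t * (1 - t) * l2" using t' by (intro mult_left_mono) auto
  moreover have "(1 - t) * \<phi> 0 + t * \<phi> 1 - \<phi> t = t*(1-t)*l2 - t*(1-t)*l1"
  proof -
    have h0: "\<phi> t = \<phi> 0 + t*l1" using z1(4) by simp
    have h1: "\<phi> 1 = \<phi> 0 + t*l1 + (1-t)*l2" using z2(4) h0 by linarith
    show ?thesis unfolding h1 h0 by (simp add: algebra_simps)
  qed
  ultimately show ?thesis by linarith
qed

lemma chord_strict:
  fixes \<phi> \<phi>' :: "real \<Rightarrow> real"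
  assumes c: "continuous_on {0..1} \<phi>"
    and d: "\<forall>t. 0 < t \<and> t < 1 \<longrightarrow> (\<phi> has_real_derivative \<phi>' t) (at t)"
    and m: "\<forall>a b. 0 < a \<and> a < b \<and> b < 1 \<longrightarrow> \<phi>' a < \<phi>' b"
    and t: "0 < t" "t < 1"
  shows "\<phi> t < (1 - t) * \<phi> 0 + t * \<phi> 1"
proof -
  obtain l1 z1 where z1: "0 < z1" "z1 < t" "DERIV \<phi> z1 :> l1" "\<phi> t - \<phi> 0 = (t - 0) * l1"
  proof -
    have "continuous_on {0..t} \<phi>" by (rule continuous_on_subset[OF c]) (use t in auto)
    moreover have "\<phi> differentiable (at x)" if "0 < x" "x < t" for x
    proof -
      have "0 < x" "x < 1" using that t by linarith+
      then show ?thesis using d by (auto simp: real_differentiable_def)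
    qed
    ultimately have "\<exists>l z. 0 < z \<and> z < t \<and> DERIV \<phi> z :> l \<and> \<phi> t - \<phi> 0 = (t - 0) * l"
      using MVT[of 0 t \<phi>] t by auto
    then show ?thesis using that by blast
  qed
  obtain l2 z2 where z2: "t < z2" "z2 < 1" "DERIV \<phi> z2 :> l2" "\<phi> 1 - \<phi> t = (1 - t) * l2"
  proof -
    have "continuous_on {t..1} \<phi>" by (rule continuous_on_subset[OF c]) (use t in auto)
    moreover have "\<phi> differentiable (at x)" if "t < x" "x < 1" for x
    proof -
      have "0 < x" "x < 1" using that t by linarith+
      then show ?thesis using d by (auto simp: real_differentiable_def)
    qed
    ultimately have "\<exists>l z. t < z \<and> z < 1 \<and> DERIV \<phi> z :> l \<and> \<phi> 1 - \<phi> t = (1 - t) * l"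
      using MVT[of t 1 \<phi>] t by auto
    then show ?thesis using that by blast
  qed
  have "0 < z1" "z1 < 1" using z1 t by linarith+
  then have "DERIV \<phi> z1 :> \<phi>' z1" using d by blast
  then have e1: "l1 = \<phi>' z1" using z1(3) DERIV_unique by blast
  have "0 < z2" "z2 < 1" using z2 t by linarith+
  then have "DERIV \<phi> z2 :> \<phi>' z2" using d by blast
  then have e2: "l2 = \<phi>' z2" using z2(3) DERIV_unique by blast
  have "l1 < l2" using m \<open>0 < z1\<close> \<open>z2 < 1\<close> z1(2) z2(1) unfolding e1 e2 by auto
  then have "t * (1 - t) * l1 < t * (1 - t) * l2" using t by (intro mult_strict_left_mono) auto
  moreover have "(1 - t) * \<phi> 0 + t * \<phi> 1 - \<phi> t = t*(1-t)*l2 - t*(1-t)*l1"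
  proof -
    have h0: "\<phi> t = \<phi> 0 + t*l1" using z1(4) by simp
    have h1: "\<phi> 1 = \<phi> 0 + t*l1 + (1-t)*l2" using z2(4) h0 by linarith
    show ?thesis unfolding h1 h0 by (simp add: algebra_simps)
  qed
  ultimately show ?thesis by linarith
qed




lemma mvt0:
  fixes g :: "real \<Rightarrow> real"
  assumes d: "\<forall>x\<ge>0. (g has_real_derivative g' x) (at x within {0..})"
    and "0 \<le> a" "a < b"
  shows "\<exists>z. a < z \<and> z < b \<and> g b - g a = (b - a) * g' z"
proof -
  have c: "continuous_on {a..b} g"
    by (rule continuous_on_subset[OF cont_of_deriv0[OF d]]) (use \<open>0 \<le> a\<close> in auto)
  have dd: "DERIV g x :> g' x" if "a < x" "x < b" for x
  proof -
    have "0 < x" using that \<open>0 \<le> a\<close> by linarith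
    then show ?thesis using d deriv_at_of_within0 by auto
  qed
  then have "g differentiable (at x)" if "a < x" "x < b" for x
    using that by (auto simp: real_differentiable_def)
  then obtain l z where z: "a < z" "z < b" "DERIV g z :> l" "g b - g a = (b - a) * l"
    using MVT[OF \<open>a < b\<close> c] by blast
  then have "l = g' z" using dd DERIV_unique by blast
  then show ?thesis using z by blast
qed

locale onefun =
  fixes f fd fdd :: "real \<Rightarrow> real" and m M \<beta> r0 :: real
  assumes f_nonneg: "\<forall>r\<ge>0. f r \<ge> 0"
  and f_deriv: "\<forall>r\<ge>0. (f has_real_derivative fd r) (at r within {0..})"
  and fd_deriv: "\<forall>r\<ge>0. (fd has_real_derivative fdd r) (at r within {0..})"
  and fdd_cont: "continuous_on {0..} fdd"
  and fdd_pos: "\<forall>r>0. fdd r > 0"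
  and f0: "f 0 = 0" and fd0: "fd 0 = 0"
  and liminf: "\<exists>c>0. eventually (\<lambda>r. fdd r \<ge> c) at_top"
  and limsup: "\<exists>C. eventually (\<lambda>r. fd r / f r \<le> C) at_top"
  and r0: "r0 > 0" and mM: "m > 0" "M > 0" "\<beta> \<ge> 0"
  and loc: "\<forall>r. 0 \<le> r \<and> r \<le> r0 \<longrightarrow> m * rpow r \<beta> \<le> fdd r \<and> fdd r \<le> M * rpow r \<beta>"
begin

lemma fd_strict: "0 \<le> a \<Longrightarrow> a < b \<Longrightarrow> fd a < fd b"
proof -
  assume "0 \<le> a" "a < b"
  from mvt0[OF fd_deriv this] obtain z where "a < z" "z < b" "fd b - fd a = (b - a) * fdd z" by blast
  moreover have "fdd z > 0" using fdd_pos \<open>a < z\<close> \<open>0 \<le> a\<close> by auto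
  moreover have "(b - a) * fdd z > 0" using \<open>a < b\<close> \<open>fdd z > 0\<close> by simp
  ultimately show ?thesis by linarith
qed

lemma fd_mono: "0 \<le> a \<Longrightarrow> a \<le> b \<Longrightarrow> fd a \<le> fd b"
  using fd_strict by (cases "a = b") (auto intro: less_imp_le)

lemma fd_nonneg: "0 \<le> r \<Longrightarrow> 0 \<le> fd r"
  using fd_mono[of 0 r] fd0 by simp

lemma fd_pos: "0 < r \<Longrightarrow> 0 < fd r"
  using fd_strict[of 0 r] fd0 by simp

lemma f_pos: "0 < r \<Longrightarrow> 0 < f r"
proof -
  assume "0 < r"
  from mvt0[OF f_deriv _ this] obtain z where "0 < z" "z < r" "f r - f 0 = (r - 0) * fd z" by auto
  then show ?thesis using fd_pos[of z] \<open>0 < r\<close> f0 by simp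
qed

lemma breg_nonneg:
  assumes "0 \<le> r" "0 \<le> rb"
  shows "0 \<le> bregman f fd r rb"
proof (cases "r = rb")
  case True then show ?thesis by (simp add: bregman_def)
next
  case False
  show ?thesis
  proof (cases "rb < r")
    case True
    from mvt0[OF f_deriv assms(2) True] obtain z where z: "rb < z" "z < r" "f r - f rb = (r - rb) * fd z" by blast
    have "fd rb \<le> fd z" using fd_mono z assms by auto
    then have "(r - rb) * fd rb \<le> (r - rb) * fd z" using True by (intro mult_left_mono) auto
    then show ?thesis using z by (simp add: bregman_def algebra_simps)
  next
    case False
    then have lt: "r < rb" using \<open>r \<noteq> rb\<close> by auto
    from mvt0[OF f_deriv assms(1) lt] obtain z where z: "r < z" "z < rb" "f rb - f r = (rb - r) * fd z" by blast
    have "fd z \<le> fd rb" using fd_mono z assms by auto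
    then have "(rb - r) * fd z \<le> (rb - r) * fd rb" using lt by (intro mult_left_mono) auto
    then show ?thesis using z by (simp add: bregman_def algebra_simps)
  qed
qed

end



context onefun begin

lemma fd_cont: "continuous_on {0..} fd" using cont_of_deriv0[OF fd_deriv] .
lemma f_cont: "continuous_on {0..} f" using cont_of_deriv0[OF f_deriv] .

lemma fd_at: "0 < r \<Longrightarrow> (fd has_real_derivative fdd r) (at r)"
  using fd_deriv deriv_at_of_within0 by auto
lemma f_at: "0 < r \<Longrightarrow> (f has_real_derivative fd r) (at r)"
  using f_deriv deriv_at_of_within0 by auto

lemma f_strict_chord:
  assumes ab: "0 \<le> a" "0 \<le> b" "a \<noteq> b" and t: "0 < t" "t < 1"
  shows "f ((1 - t) * a + t * b) < (1 - t) * f a + t * f b"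
proof -
  define \<phi> where "\<phi> s = f (a + s * (b - a))" for s
  define \<phi>' where "\<phi>' s = fd (a + s * (b - a)) * (b - a)" for s
  have pp: "0 < a + s * (b - a)" if "0 < s" "s < 1" for s
  proof -
    have "a + s * (b - a) = (1 - s) * a + s * b" by (simp add: algebra_simps)
    moreover have "0 < (1 - s) * a \<or> 0 < s * b" using ab that by (cases "b = 0") auto
    moreover have "0 \<le> (1 - s) * a" "0 \<le> s * b" using ab that by auto
    ultimately show ?thesis by linarith
  qed
  have pn: "0 \<le> a + s * (b - a)" if "0 \<le> s" "s \<le> 1" for s
  proof -
    have "a + s * (b - a) = (1 - s) * a + s * b" by (simp add: algebra_simps)
    moreover have "0 \<le> (1 - s) * a" "0 \<le> s * b" using ab that by auto
    ultimately show ?thesis by linarith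
  qed
  have c: "continuous_on {0..1} \<phi>"
    unfolding \<phi>_def
    by (rule continuous_on_compose2[OF f_cont]) (auto intro!: continuous_intros pn)
  have d: "\<forall>s. 0 < s \<and> s < 1 \<longrightarrow> (\<phi> has_real_derivative \<phi>' s) (at s)"
  proof (intro allI impI)
    fix s :: real assume s: "0 < s \<and> s < 1"
    have "((\<lambda>s. a + s * (b - a)) has_real_derivative (b - a)) (at s)"
      by (auto intro!: derivative_eq_intros)
    from DERIV_chain2[OF f_at[OF pp] this] s show "(\<phi> has_real_derivative \<phi>' s) (at s)"
      unfolding \<phi>_def \<phi>'_def by auto
  qed
  have m: "\<forall>x y. 0 < x \<and> x < y \<and> y < 1 \<longrightarrow> \<phi>' x < \<phi>' y"
  proof (intro allI impI)
    fix x y :: real assume xy: "0 < x \<and> x < y \<and> y < 1"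
    show "\<phi>' x < \<phi>' y"
    proof (cases "a < b")
      case True
      then have "a + x * (b - a) < a + y * (b - a)" using xy by simp
      then have "fd (a + x * (b - a)) < fd (a + y * (b - a))" using fd_strict pn xy by auto
      then show ?thesis unfolding \<phi>'_def using True by simp
    next
      case False
      then have ba: "b < a" using ab by auto
      then have "a + y * (b - a) < a + x * (b - a)" using xy by (simp add: mult_strict_right_mono_neg)
      then have "fd (a + y * (b - a)) < fd (a + x * (b - a))" using fd_strict pn xy by auto
      then show ?thesis unfolding \<phi>'_def using ba by (simp add: mult_strict_right_mono_neg)
    qed
  qed
  have "\<phi> t < (1 - t) * \<phi> 0 + t * \<phi> 1" by (rule chord_strict[OF c d m t])
  moreover have "a + t * (b - a) = (1 - t) * a + t * b" by (simp add: algebra_simps)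
  ultimately show ?thesis unfolding \<phi>_def by simp
qed

lemma f_chord:
  assumes ab: "0 \<le> a" "0 \<le> b" and t: "0 \<le> t" "t \<le> 1"
  shows "f ((1 - t) * a + t * b) \<le> (1 - t) * f a + t * f b"
proof (cases "a = b \<or> t = 0 \<or> t = 1")
  case True
  then show ?thesis by (auto simp: algebra_simps)
next
  case False
  then show ?thesis using f_strict_chord[OF ab _, of t] t by auto
qed

end



lemma powr_deriv_shift:
  assumes "0 < x"
  shows "((\<lambda>s. s powr (c + 1)) has_real_derivative (c + 1) * x powr c) (at x)"
  using has_real_derivative_powr[OF assms, of "c + 1"] by simp

lemma powr_cont_shift:
  assumes "c > 0"
  shows "continuous_on {0..} (\<lambda>s::real. s powr c)"
  using assms by (intro continuous_on_powr') (auto intro: continuous_intros)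

lemma cancel_b2:
  assumes "(b::real) \<ge> 0"
  shows "m / ((b + 1) * (b + 2)) * ((b + 1 + 1) * P) = m / (b + 1) * P"
proof -
  have e: "b + 1 + 1 = b + 2" by simp
  have n: "b + 2 \<noteq> 0" "b + 1 \<noteq> 0" using assms by auto
  have "m / ((b + 1) * (b + 2)) * ((b + 2) * P) = m * P * ((b + 2) / ((b + 1) * (b + 2)))"
    by (simp add: algebra_simps)
  also have "(b + 2) / ((b + 1) * (b + 2)) = 1 / (b + 1)" using n by simp
  finally show ?thesis unfolding e by simp
qed

lemma rpow_pos: "0 < x \<Longrightarrow> rpow x b = x powr b"
  by (simp add: rpow_def)

context onefun begin

lemma incr_helper:
  fixes \<psi> \<psi>' :: "real \<Rightarrow> real"
  assumes "0 \<le> r" and c: "continuous_on {0..r} \<psi>"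
    and d: "\<And>x. 0 < x \<Longrightarrow> x < r \<Longrightarrow> (\<psi> has_real_derivative \<psi>' x) (at x) \<and> \<psi>' x \<ge> 0"
  shows "\<psi> 0 \<le> \<psi> r"
  using DERIV_nonneg_imp_increasing_open[OF assms(1) _ c] d by blast

lemma part3a:
  assumes r: "0 \<le> r" "r \<le> r0"
  shows "m / (\<beta> + 1) * r powr (\<beta> + 1) \<le> fd r \<and> fd r \<le> M / (\<beta> + 1) * r powr (\<beta> + 1)"
proof
  have b1: "\<beta> + 1 > 0" using mM by auto
  have cP: "continuous_on {0..r} (\<lambda>s::real. s powr (\<beta> + 1))"
    by (rule continuous_on_subset[OF powr_cont_shift[OF b1]]) auto
  have cfd: "continuous_on {0..r} fd" by (rule continuous_on_subset[OF fd_cont]) auto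
  let ?\<psi> = "\<lambda>s. fd s - m / (\<beta> + 1) * s powr (\<beta> + 1)"
  have "?\<psi> 0 \<le> ?\<psi> r"
  proof (rule incr_helper[OF r(1)])
    show "continuous_on {0..r} ?\<psi>" by (intro continuous_on_diff continuous_on_mult continuous_on_const cfd cP)
    fix x assume x: "0 < x" "x < r"
    have "((\<lambda>s. fd s - m / (\<beta> + 1) * s powr (\<beta> + 1)) has_real_derivative
            fdd x - m / (\<beta> + 1) * ((\<beta> + 1) * x powr \<beta>)) (at x)"
      by (intro DERIV_diff DERIV_cmult fd_at powr_deriv_shift x(1))
    moreover have "m * x powr \<beta> \<le> fdd x" using loc[rule_format, of x] x r rpow_pos[of x \<beta>] by auto
    ultimately show "(?\<psi> has_real_derivative (fdd x - m / (\<beta> + 1) * ((\<beta> + 1) * x powr \<beta>))) (at x) \<and>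
        0 \<le> fdd x - m / (\<beta> + 1) * ((\<beta> + 1) * x powr \<beta>)" using b1 by simp
  qed
  then show "m / (\<beta> + 1) * r powr (\<beta> + 1) \<le> fd r" using fd0 by simp
  let ?\<chi> = "\<lambda>s. M / (\<beta> + 1) * s powr (\<beta> + 1) - fd s"
  have "?\<chi> 0 \<le> ?\<chi> r"
  proof (rule incr_helper[OF r(1)])
    show "continuous_on {0..r} ?\<chi>" by (intro continuous_on_diff continuous_on_mult continuous_on_const cfd cP)
    fix x assume x: "0 < x" "x < r"
    have "((\<lambda>s. M / (\<beta> + 1) * s powr (\<beta> + 1) - fd s) has_real_derivative
            M / (\<beta> + 1) * ((\<beta> + 1) * x powr \<beta>) - fdd x) (at x)"
      by (intro DERIV_diff DERIV_cmult fd_at powr_deriv_shift x(1))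
    moreover have "fdd x \<le> M * x powr \<beta>" using loc[rule_format, of x] x r rpow_pos[of x \<beta>] by auto
    ultimately show "(?\<chi> has_real_derivative (M / (\<beta> + 1) * ((\<beta> + 1) * x powr \<beta>) - fdd x)) (at x) \<and>
        0 \<le> M / (\<beta> + 1) * ((\<beta> + 1) * x powr \<beta>) - fdd x" using b1 by simp
  qed
  then show "fd r \<le> M / (\<beta> + 1) * r powr (\<beta> + 1)" using fd0 by simp
qed

lemma part3b:
  assumes r: "0 \<le> r" "r \<le> r0"
  shows "m / ((\<beta> + 1) * (\<beta> + 2)) * r powr (\<beta> + 2) \<le> f r \<and>
         f r \<le> M / ((\<beta> + 1) * (\<beta> + 2)) * r powr (\<beta> + 2)"
proof
  have b1: "\<beta> + 1 > 0" "\<beta> + 2 > 0" using mM by auto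
  have cP: "continuous_on {0..r} (\<lambda>s::real. s powr ((\<beta> + 1) + 1))"
    by (rule continuous_on_subset[OF powr_cont_shift]) (use b1 in auto)
  have cf: "continuous_on {0..r} f" by (rule continuous_on_subset[OF f_cont]) auto
  let ?\<psi> = "\<lambda>s. f s - m / ((\<beta> + 1) * (\<beta> + 2)) * s powr ((\<beta> + 1) + 1)"
  have "?\<psi> 0 \<le> ?\<psi> r"
  proof (rule incr_helper[OF r(1)])
    show "continuous_on {0..r} ?\<psi>" by (intro continuous_on_diff continuous_on_mult continuous_on_const cf cP)
    fix x assume x: "0 < x" "x < r"
    have "(?\<psi> has_real_derivative
            fd x - m / ((\<beta> + 1) * (\<beta> + 2)) * (((\<beta> + 1) + 1) * x powr (\<beta> + 1))) (at x)"
      by (intro DERIV_diff DERIV_cmult f_at powr_deriv_shift x(1))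
    moreover have "m / (\<beta> + 1) * x powr (\<beta> + 1) \<le> fd x" using part3a x r by auto
    moreover have "m / ((\<beta> + 1) * (\<beta> + 2)) * (((\<beta> + 1) + 1) * x powr (\<beta> + 1)) = m / (\<beta> + 1) * x powr (\<beta> + 1)"
      using mM by (intro cancel_b2) auto
    ultimately show "(?\<psi> has_real_derivative (fd x - m / ((\<beta> + 1) * (\<beta> + 2)) * (((\<beta> + 1) + 1) * x powr (\<beta> + 1)))) (at x) \<and>
        0 \<le> fd x - m / ((\<beta> + 1) * (\<beta> + 2)) * (((\<beta> + 1) + 1) * x powr (\<beta> + 1))" by simp
  qed
  moreover have "(\<beta> + 1) + 1 = \<beta> + 2" by simp
  ultimately show "m / ((\<beta> + 1) * (\<beta> + 2)) * r powr (\<beta> + 2) \<le> f r" using f0 by simp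
  let ?\<chi> = "\<lambda>s. M / ((\<beta> + 1) * (\<beta> + 2)) * s powr ((\<beta> + 1) + 1) - f s"
  have "?\<chi> 0 \<le> ?\<chi> r"
  proof (rule incr_helper[OF r(1)])
    show "continuous_on {0..r} ?\<chi>" by (intro continuous_on_diff continuous_on_mult continuous_on_const cf cP)
    fix x assume x: "0 < x" "x < r"
    have "(?\<chi> has_real_derivative
            M / ((\<beta> + 1) * (\<beta> + 2)) * (((\<beta> + 1) + 1) * x powr (\<beta> + 1)) - fd x) (at x)"
      by (intro DERIV_diff DERIV_cmult f_at powr_deriv_shift x(1))
    moreover have "fd x \<le> M / (\<beta> + 1) * x powr (\<beta> + 1)" using part3a x r by auto
    moreover have "M / ((\<beta> + 1) * (\<beta> + 2)) * (((\<beta> + 1) + 1) * x powr (\<beta> + 1)) = M / (\<beta> + 1) * x powr (\<beta> + 1)"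
      using mM by (intro cancel_b2) auto
    ultimately show "(?\<chi> has_real_derivative (M / ((\<beta> + 1) * (\<beta> + 2)) * (((\<beta> + 1) + 1) * x powr (\<beta> + 1)) - fd x)) (at x) \<and>
        0 \<le> M / ((\<beta> + 1) * (\<beta> + 2)) * (((\<beta> + 1) + 1) * x powr (\<beta> + 1)) - fd x" by simp
  qed
  then show "f r \<le> M / ((\<beta> + 1) * (\<beta> + 2)) * r powr (\<beta> + 2)" using f0 \<open>(\<beta> + 1) + 1 = \<beta> + 2\<close> by simp
qed

end



lemma comb_le:
  fixes x y a b c v :: real
  assumes "0 \<le> x" "0 \<le> y" "0 \<le> a" "0 \<le> b" "0 \<le> c"
    and "v \<le> a*x \<or> v \<le> b*x \<or> v \<le> c*y"
  shows "v \<le> (a+b+c)*(x+y)"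
proof -
  have "a*x \<le> (a+b+c)*(x+y)" "b*x \<le> (a+b+c)*(x+y)" "c*y \<le> (a+b+c)*(x+y)"
    using assms by (intro mult_mono; simp)+
  then show ?thesis using assms(6) by linarith
qed

context onefun begin

lemma part4: "\<exists>\<alpha>. \<forall>r\<ge>0. fd r \<le> \<alpha> * (min 1 r + f r)"
proof -
  obtain C where "eventually (\<lambda>r. fd r / f r \<le> C) at_top" using limsup by blast
  then obtain N where N: "\<And>r. r \<ge> N \<Longrightarrow> fd r / f r \<le> C" by (auto simp: eventually_at_top_linorder)
  define R where "R = max N 1"
  define \<rho> where "\<rho> = min r0 1"
  have \<rho>: "0 < \<rho>" "\<rho> \<le> 1" "\<rho> \<le> r0" using r0 by (auto simp: \<rho>_def)
  have R: "R \<ge> 1" "R \<ge> N" by (auto simp: R_def)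
  define a where "a = M / (\<beta> + 1)"
  define b where "b = fd R / \<rho>"
  define c where "c = max C 0"
  have abc: "0 \<le> a" "0 \<le> b" "0 \<le> c" using mM \<rho> fd_nonneg[of R] R by (auto simp: a_def b_def c_def)
  have "fd r \<le> (a + b + c) * (min 1 r + f r)" if r: "r \<ge> 0" for r
  proof (rule comb_le[OF _ _ abc])
    show "0 \<le> min 1 r" "0 \<le> f r" using r f_nonneg by auto
    consider "r \<le> \<rho>" | "\<rho> < r" "r \<le> R" | "R < r" by linarith
    then show "fd r \<le> a * min 1 r \<or> fd r \<le> b * min 1 r \<or> fd r \<le> c * f r"
    proof cases
      case 1
      have "r powr (\<beta> + 1) \<le> r"
      proof (cases "r = 0")
        case False
        then have "r powr (\<beta> + 1) = r powr \<beta> * r" using r by (simp add: powr_add)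
        moreover have "r powr \<beta> \<le> 1" using 1 \<rho> r mM by (intro powr_le1) auto
        ultimately show ?thesis using r by (simp add: mult_left_le_one_le)
      qed simp
      then have "a * r powr (\<beta> + 1) \<le> a * r" using abc by (intro mult_left_mono)
      moreover have "fd r \<le> a * r powr (\<beta> + 1)" using part3a[of r] 1 r \<rho> by (auto simp: a_def)
      moreover have "min 1 r = r" using 1 \<rho> by auto
      ultimately show ?thesis by auto
    next
      case 2
      have "fd r \<le> fd R" using fd_mono 2 r by auto
      also have "fd R = b * \<rho>" using \<rho> by (simp add: b_def)
      also have "b * \<rho> \<le> b * min 1 r" using abc 2 \<rho> by (intro mult_left_mono) auto
      finally show ?thesis by auto
    next
      case 3
      then have "r > 0" "r \<ge> N" using R by auto
      then have "f r > 0" using f_pos by auto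
      moreover have "fd r / f r \<le> C" using N \<open>r \<ge> N\<close> by auto
      ultimately have "fd r \<le> C * f r" by (simp add: divide_le_eq)
      also have "C * f r \<le> c * f r" using \<open>f r > 0\<close> by (intro mult_right_mono) (auto simp: c_def)
      finally show ?thesis by auto
    qed
  qed
  then show ?thesis by blast
qed

lemma fdd_bound: "0 \<le> K \<Longrightarrow> \<exists>B>0. \<forall>s. 0 \<le> s \<and> s \<le> K \<longrightarrow> fdd s \<le> B"
proof -
  have "continuous_on {0..K} fdd" by (rule continuous_on_subset[OF fdd_cont]) auto
  then have "compact (fdd ` {0..K})" by (rule compact_continuous_image) simp
  then obtain a where "\<forall>x\<in>fdd ` {0..K}. norm x \<le> a" using compact_imp_bounded bounded_iff by metis
  then have "\<forall>s. 0 \<le> s \<and> s \<le> K \<longrightarrow> fdd s \<le> max a 1" by force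
  then show ?thesis by (intro exI[of _ "max a 1"]) auto
qed

lemma breg_deriv:
  "\<forall>s\<ge>0. ((\<lambda>s. bregman f fd s rb) has_real_derivative (fd s - fd rb)) (at s within {0..})"
proof (intro allI impI)
  fix s :: real assume "0 \<le> s"
  have "((\<lambda>s. f s - f rb - fd rb * (s - rb)) has_real_derivative (fd s - 0 - fd rb * (1 - 0))) (at s within {0..})"
    using f_deriv \<open>0 \<le> s\<close> by (intro DERIV_diff DERIV_cmult DERIV_const DERIV_ident) auto
  then show "((\<lambda>s. bregman f fd s rb) has_real_derivative (fd s - fd rb)) (at s within {0..})"
    by (simp add: bregman_def)
qed

lemma coco:
  assumes "0 \<le> K"
  shows "\<exists>B>0. \<forall>r rb. 0 \<le> r \<and> r \<le> K \<and> 0 \<le> rb \<and> rb \<le> K \<longrightarrow>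
            (fd r - fd rb)\<^sup>2 \<le> B * bregman f fd r rb"
proof -
  obtain B where B: "B > 0" "\<And>s. 0 \<le> s \<Longrightarrow> s \<le> K \<Longrightarrow> fdd s \<le> B" using fdd_bound[OF assms] by blast
  have main: "(fd r - fd rb)\<^sup>2 / (2 * B) \<le> bregman f fd r rb"
    if r: "0 \<le> r" "r \<le> K" "0 \<le> rb" "rb \<le> K" for r rb
  proof -
    define \<psi> where "\<psi> s = bregman f fd s rb - (fd s - fd rb)\<^sup>2 / (2 * B)" for s
    define \<psi>' where "\<psi>' s = (fd s - fd rb) * (1 - fdd s / B)" for s
    have d: "\<forall>s\<ge>0. (\<psi> has_real_derivative \<psi>' s) (at s within {0..})"
    proof (intro allI impI)
      fix s :: real assume s: "0 \<le> s"
      have "((\<lambda>s. (fd s - fd rb)\<^sup>2 / (2 * B)) has_real_derivative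
             (of_nat 2 * ((fdd s - 0) * (fd s - fd rb) ^ (2 - Suc 0))) / (2 * B)) (at s within {0..})"
        using fd_deriv s by (intro DERIV_cdivide DERIV_power DERIV_diff DERIV_const) auto
      then have "(\<psi> has_real_derivative (fd s - fd rb) - (of_nat 2 * ((fdd s - 0) * (fd s - fd rb) ^ (2 - Suc 0))) / (2 * B))
           (at s within {0..})"
        unfolding \<psi>_def using breg_deriv s by (intro DERIV_diff) auto
      moreover have "(fd s - fd rb) - (of_nat 2 * ((fdd s - 0) * (fd s - fd rb) ^ (2 - Suc 0))) / (2 * B) = \<psi>' s"
        using B by (simp add: \<psi>'_def field_simps)
      ultimately show "(\<psi> has_real_derivative \<psi>' s) (at s within {0..})" by simp
    qed
    have \<psi>rb: "\<psi> rb = 0" by (simp add: \<psi>_def bregman_def)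
    have "0 \<le> \<psi> r"
    proof (cases "rb \<le> r")
      case True
      have "\<psi> rb \<le> \<psi> r"
      proof (rule mono0[OF d r(3) True], intro allI impI)
        fix x assume x: "rb < x \<and> x < r"
        then have "fd rb \<le> fd x" using fd_mono r by auto
        moreover have "fdd x \<le> B" using B x r by auto
        then have "0 \<le> 1 - fdd x / B" using B by simp
        ultimately show "0 \<le> \<psi>' x" unfolding \<psi>'_def by simp
      qed
      then show ?thesis using \<psi>rb by simp
    next
      case False
      have "\<psi> rb \<le> \<psi> r"
      proof (rule antimono0[OF d r(1)], use False in simp, intro allI impI)
        fix x assume x: "r < x \<and> x < rb"
        then have "fd x \<le> fd rb" using fd_mono r by auto
        moreover have "fdd x \<le> B" using B x r by auto
        then have "0 \<le> 1 - fdd x / B" using B by simp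
        ultimately show "\<psi>' x \<le> 0" unfolding \<psi>'_def by (simp add: mult_nonpos_nonneg)
      qed
      then show ?thesis using \<psi>rb by simp
    qed
    then show ?thesis by (simp add: \<psi>_def)
  qed
  show ?thesis
  proof (intro exI[of _ "2 * B"] conjI allI impI)
    show "0 < 2 * B" using B by simp
    fix r rb assume "0 \<le> r \<and> r \<le> K \<and> 0 \<le> rb \<and> rb \<le> K"
    then have "(fd r - fd rb)\<^sup>2 / (2 * B) \<le> bregman f fd r rb" using main by auto
    then show "(fd r - fd rb)\<^sup>2 \<le> 2 * B * bregman f fd r rb" using B by (simp add: divide_le_eq mult.commute)
  qed
qed

end



context onefun begin

lemma far:
  assumes "0 \<le> H"
  shows "\<exists>K\<ge>H. \<forall>r rb. K < r \<and> 0 \<le> rb \<and> rb \<le> H \<longrightarrow> r \<le> bregman f fd r rb"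
proof -
  obtain c where c: "c > 0" "eventually (\<lambda>r. fdd r \<ge> c) at_top" using liminf by blast
  then obtain N where N: "\<And>r. r \<ge> N \<Longrightarrow> fdd r \<ge> c" by (auto simp: eventually_at_top_linorder)
  define A where "A = max N H"
  have A: "A \<ge> 0" "A \<ge> H" "A \<ge> N" using assms by (auto simp: A_def)
  have lin: "fd A + c * (s - A) \<le> fd s" if s: "A \<le> s" for s
  proof -
    have d: "\<forall>x\<ge>0. ((\<lambda>x. fd x - c * x) has_real_derivative (fdd x - c * 1)) (at x within {0..})"
      using fd_deriv by (auto intro!: DERIV_diff DERIV_cmult DERIV_ident)
    have "fd A - c * A \<le> fd s - c * s"
      by (rule mono0[OF d A(1) s]) (use N A in auto)
    then show ?thesis by (simp add: algebra_simps)
  qed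
  have quad: "c * (r - A)\<^sup>2 / 2 \<le> bregman f fd r rb" if r: "A \<le> r" and rb: "0 \<le> rb" "rb \<le> H" for r rb
  proof -
    define chi where "chi s = bregman f fd s rb - c * (s - A)\<^sup>2 / 2" for s
    have d: "\<forall>s\<ge>0. (chi has_real_derivative (fd s - fd rb - c * (s - A))) (at s within {0..})"
    proof (intro allI impI)
      fix s :: real assume s: "0 \<le> s"
      have "((\<lambda>s. c * (s - A)\<^sup>2 / 2) has_real_derivative c * (of_nat 2 * ((1 - 0) * (s - A) ^ (2 - Suc 0))) / 2)
         (at s within {0..})"
        by (intro DERIV_cdivide DERIV_cmult DERIV_power DERIV_diff DERIV_ident DERIV_const)
      then have dd: "(chi has_real_derivative (fd s - fd rb) - c * (of_nat 2 * ((1 - 0) * (s - A) ^ (2 - Suc 0))) / 2)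
         (at s within {0..})"
        unfolding chi_def using breg_deriv s by (intro DERIV_diff) auto
      have eq: "c * (of_nat 2 * ((1 - 0) * (s - A) ^ (2 - Suc 0))) / 2 = c * (s - A)" by simp
      show "(chi has_real_derivative (fd s - fd rb - c * (s - A))) (at s within {0..})" using dd unfolding eq by simp
    qed
    have "chi A \<le> chi r"
    proof (rule mono0[OF d A(1) r], intro allI impI)
      fix x assume x: "A < x \<and> x < r"
      have "fd rb \<le> fd A" using fd_mono rb A by auto
      then show "0 \<le> fd x - fd rb - c * (x - A)" using lin[of x] x by auto
    qed
    moreover have "chi A \<ge> 0" using breg_nonneg[of A rb] A rb by (simp add: chi_def)
    ultimately show ?thesis by (simp add: chi_def)
  qed
  define K where "K = 2 * A + 8 / c"
  have "8 / c > 0" using c by simp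
  then have K: "K \<ge> H" unfolding K_def using A by linarith
  have "r \<le> bregman f fd r rb" if r: "K < r" and rb: "0 \<le> rb" "rb \<le> H" for r rb
  proof -
    have "8 / c > 0" using c by simp
    then have r2: "2 * A \<le> r" "8 / c \<le> r" using r A unfolding K_def by linarith+
    then have "r / 2 \<le> r - A" by simp
    moreover have "0 \<le> r / 2" using r2 A by simp
    ultimately have "(r / 2)\<^sup>2 \<le> (r - A)\<^sup>2" by (rule power_mono)
    then have a1: "c * (r / 2)\<^sup>2 / 2 \<le> c * (r - A)\<^sup>2 / 2" using c by simp
    have a2: "c * (r / 2)\<^sup>2 / 2 = r * (c * r / 8)" by (simp add: power2_eq_square)
    have "1 \<le> c * r / 8" using r2(2) c by (simp add: field_simps)
    moreover have "0 \<le> r" using r2 A by linarith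
    ultimately have "r * 1 \<le> r * (c * r / 8)" by (intro mult_left_mono)
    then have "r \<le> r * (c * r / 8)" by simp
    then have "r \<le> c * (r - A)\<^sup>2 / 2" using a1 a2 by linarith
    also have "\<dots> \<le> bregman f fd r rb" using quad[of r rb] r rb r2 A by auto
    finally show ?thesis .
  qed
  then show ?thesis using K by blast
qed

definition G where "G = inv_into {0..} fd"

lemma fd_inj: "inj_on fd {0..}"
  by (rule strict_mono_on_imp_inj_on) (auto simp: strict_mono_on_def intro: fd_strict)

lemma G_fd: "0 \<le> r \<Longrightarrow> G (fd r) = r"
  unfolding G_def using fd_inj by (simp add: inv_into_f_f)

lemma G_deriv:
  assumes r: "0 < r"
  shows "(G has_real_derivative inverse (fdd r)) (at (fd r))"
proof (rule DERIV_inverse_function[where a = "fd (r/2)" and b = "fd (r+1)"])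
  show "(fd has_real_derivative fdd r) (at (G (fd r)))" using G_fd[of r] r fd_at by simp
  show "fdd r \<noteq> 0" using fdd_pos r by auto
  show "fd (r / 2) < fd r" "fd r < fd (r + 1)" using fd_strict r by auto
  have c: "continuous_on {r/2..r+1} fd" by (rule continuous_on_subset[OF fd_cont]) (use r in auto)
  show "fd (G y) = y" if y: "fd (r / 2) < y" "y < fd (r + 1)" for y
  proof -
    obtain z where z: "r/2 \<le> z" "z \<le> r+1" "fd z = y" using IVT'[of fd "r/2" y "r+1"] y c r by auto
    then show ?thesis using G_fd[of z] r by auto
  qed
  show "isCont G (fd r)"
  proof (rule isCont_inverse_function2[where a = "r/2" and b = "r+1" and f = fd and x = r])
    show "r/2 < r" "r < r + 1" using r by auto
    show "G (fd z) = z" if "r/2 \<le> z" "z \<le> r + 1" for z using G_fd that r by auto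
    show "isCont fd z" if "r/2 \<le> z" "z \<le> r + 1" for z using fd_at[of z] that r DERIV_isCont by auto
  qed
qed

end



lemma p1:
  fixes h :: "real \<times> real \<Rightarrow> real"
  assumes "(h has_derivative (\<lambda>v. A * fst v + B * snd v)) (at (a + s, c))"
  shows "((\<lambda>s. h (a + s, c)) has_real_derivative A) (at s)"
proof -
  have "((\<lambda>s. (a + s, c)) has_derivative (\<lambda>v. (v, 0))) (at s)"
    by (auto intro!: derivative_eq_intros)
  from has_derivative_compose[OF this assms] show ?thesis
    unfolding has_field_derivative_def by (rule has_derivative_eq_rhs) (auto simp: fun_eq_iff)
qed

lemma p2:
  fixes h :: "real \<times> real \<Rightarrow> real"
  assumes "(h has_derivative (\<lambda>v. A * fst v + B * snd v)) (at (c, a + s))"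
  shows "((\<lambda>s. h (c, a + s)) has_real_derivative B) (at s)"
proof -
  have "((\<lambda>s. (c, a + s)) has_derivative (\<lambda>v. (0, v))) (at s)"
    by (auto intro!: derivative_eq_intros)
  from has_derivative_compose[OF this assms] show ?thesis
    unfolding has_field_derivative_def by (rule has_derivative_eq_rhs) (auto simp: fun_eq_iff)
qed

lemma p1w:
  fixes h :: "real \<times> real \<Rightarrow> real"
  assumes "(h has_derivative (\<lambda>v. A * fst v + B * snd v)) (at (s, c) within quad)" "0 \<le> c"
  shows "((\<lambda>s. h (s, c)) has_real_derivative A) (at s within {0..})"
proof -
  have "((\<lambda>s. (s, c)) has_derivative (\<lambda>v. (v, 0))) (at s within {0..})"
    by (auto intro!: derivative_eq_intros)
  moreover have "(h has_derivative (\<lambda>v. A * fst v + B * snd v)) (at (s, c) within (\<lambda>s. (s, c)) ` {0..})"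
    by (rule has_derivative_subset[OF assms(1)]) (use assms(2) in \<open>auto simp: quad_def\<close>)
  ultimately have "((\<lambda>s. h (s, c)) has_derivative (\<lambda>x. A * fst (x, 0::real) + B * snd (x, 0::real))) (at s within {0..})"
    by (rule has_derivative_in_compose)
  then show ?thesis
    unfolding has_field_derivative_def by (rule has_derivative_eq_rhs) (auto simp: fun_eq_iff)
qed

lemma p2w:
  fixes h :: "real \<times> real \<Rightarrow> real"
  assumes "(h has_derivative (\<lambda>v. A * fst v + B * snd v)) (at (c, s) within quad)" "0 \<le> c"
  shows "((\<lambda>s. h (c, s)) has_real_derivative B) (at s within {0..})"
proof -
  have "((\<lambda>s. (c, s)) has_derivative (\<lambda>v. (0, v))) (at s within {0..})"
    by (auto intro!: derivative_eq_intros)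
  moreover have "(h has_derivative (\<lambda>v. A * fst v + B * snd v)) (at (c, s) within (\<lambda>s. (c, s)) ` {0..})"
    by (rule has_derivative_subset[OF assms(1)]) (use assms(2) in \<open>auto simp: quad_def\<close>)
  ultimately have "((\<lambda>s. h (c, s)) has_derivative (\<lambda>x. A * fst (0::real, x) + B * snd (0::real, x))) (at s within {0..})"
    by (rule has_derivative_in_compose)
  then show ?thesis
    unfolding has_field_derivative_def by (rule has_derivative_eq_rhs) (auto simp: fun_eq_iff)
qed

lemma dist_box:
  fixes x1 x2 s t e :: real
  assumes "0 \<le> s" "s \<le> e" "0 \<le> t" "t \<le> e"
  shows "dist (x1 + s, x2 + t) (x1, x2) \<le> 2 * e"
proof -
  have "dist (x1 + s, x2 + t) (x1, x2) = sqrt (s\<^sup>2 + t\<^sup>2)" by (simp add: dist_Pair_Pair dist_real_def)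
  also have "\<dots> \<le> \<bar>s\<bar> + \<bar>t\<bar>" by (rule sqrt_sum_squares_le_sum_abs)
  finally show ?thesis using assms by auto
qed

lemma schwarz_claim:
  fixes h g1 g2 a11 a12 a21 a22 :: "real \<times> real \<Rightarrow> real"
  assumes S: "ball (x1, x2) e0 \<subseteq> S"
    and hd: "\<forall>y\<in>S. (h has_derivative (\<lambda>v. g1 y * fst v + g2 y * snd v)) (at y)"
    and g1d: "\<forall>y\<in>S. (g1 has_derivative (\<lambda>v. a11 y * fst v + a12 y * snd v)) (at y)"
    and g2d: "\<forall>y\<in>S. (g2 has_derivative (\<lambda>v. a21 y * fst v + a22 y * snd v)) (at y)"
    and t: "0 < t" "2 * t < e0"
  shows "\<exists>p q. dist p (x1, x2) \<le> 2 * t \<and> dist q (x1, x2) \<le> 2 * t \<and> a12 p = a21 q"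
proof -
  have inS: "(x1 + s, x2 + r) \<in> S" if "0 \<le> s" "s \<le> t" "0 \<le> r" "r \<le> t" for s r
  proof -
    have "dist (x1 + s, x2 + r) (x1, x2) \<le> 2 * t" using dist_box that by blast
    then have "(x1 + s, x2 + r) \<in> ball (x1, x2) e0" using t by (simp add: dist_commute)
    then show ?thesis using S by auto
  qed
  define D where "D = h (x1 + t, x2 + t) - h (x1 + t, x2) - h (x1, x2 + t) + h (x1, x2)"
  have "\<exists>z. 0 < z \<and> z < t \<and>
      (\<lambda>s. h (x1 + s, x2 + t) - h (x1 + s, x2)) t - (\<lambda>s. h (x1 + s, x2 + t) - h (x1 + s, x2)) 0
      = (t - 0) * (g1 (x1 + z, x2 + t) - g1 (x1 + z, x2))"
  proof (rule MVT2[OF t(1)])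
    fix s assume s: "0 \<le> s" "s \<le> t"
    have a: "((\<lambda>s. h (x1 + s, x2 + t)) has_real_derivative g1 (x1 + s, x2 + t)) (at s)"
      using hd inS[of s t] s t by (intro p1) auto
    have b: "((\<lambda>s. h (x1 + s, x2)) has_real_derivative g1 (x1 + s, x2)) (at s)"
      using hd inS[of s 0] s t p1[of h "g1 (x1 + s, x2 + 0)" "g2 (x1 + s, x2 + 0)" x1 s x2] by auto
    show "((\<lambda>s. h (x1 + s, x2 + t) - h (x1 + s, x2)) has_real_derivative
          g1 (x1 + s, x2 + t) - g1 (x1 + s, x2)) (at s)"
      by (rule DERIV_diff[OF a b])
  qed
  then obtain z where z: "0 < z" "z < t" "D = t * (g1 (x1 + z, x2 + t) - g1 (x1 + z, x2))"
    by (auto simp: D_def algebra_simps)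
  have "\<exists>w. 0 < w \<and> w < t \<and> (\<lambda>r. g1 (x1 + z, x2 + r)) t - (\<lambda>r. g1 (x1 + z, x2 + r)) 0
      = (t - 0) * a12 (x1 + z, x2 + w)"
  proof (rule MVT2[OF t(1)])
    fix r assume r: "0 \<le> r" "r \<le> t"
    show "((\<lambda>r. g1 (x1 + z, x2 + r)) has_real_derivative a12 (x1 + z, x2 + r)) (at r)"
      using g1d inS[of z r] r z by (intro p2) auto
  qed
  then obtain w where w: "0 < w" "w < t" "g1 (x1 + z, x2 + t) - g1 (x1 + z, x2) = t * a12 (x1 + z, x2 + w)"
    by auto
  have "\<exists>z. 0 < z \<and> z < t \<and>
      (\<lambda>r. h (x1 + t, x2 + r) - h (x1, x2 + r)) t - (\<lambda>r. h (x1 + t, x2 + r) - h (x1, x2 + r)) 0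
      = (t - 0) * (g2 (x1 + t, x2 + z) - g2 (x1, x2 + z))"
  proof (rule MVT2[OF t(1)])
    fix r assume r: "0 \<le> r" "r \<le> t"
    have a: "((\<lambda>r. h (x1 + t, x2 + r)) has_real_derivative g2 (x1 + t, x2 + r)) (at r)"
      using hd inS[of t r] r t by (intro p2) auto
    have b: "((\<lambda>r. h (x1, x2 + r)) has_real_derivative g2 (x1, x2 + r)) (at r)"
      using hd inS[of 0 r] r t p2[of h "g1 (x1 + 0, x2 + r)" "g2 (x1 + 0, x2 + r)" x1 x2 r] by auto
    show "((\<lambda>r. h (x1 + t, x2 + r) - h (x1, x2 + r)) has_real_derivative
          g2 (x1 + t, x2 + r) - g2 (x1, x2 + r)) (at r)"
      by (rule DERIV_diff[OF a b])
  qed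
  then obtain z' where z': "0 < z'" "z' < t" "D = t * (g2 (x1 + t, x2 + z') - g2 (x1, x2 + z'))"
    by (auto simp: D_def algebra_simps)
  have "\<exists>w. 0 < w \<and> w < t \<and> (\<lambda>s. g2 (x1 + s, x2 + z')) t - (\<lambda>s. g2 (x1 + s, x2 + z')) 0
      = (t - 0) * a21 (x1 + w, x2 + z')"
  proof (rule MVT2[OF t(1)])
    fix s assume s: "0 \<le> s" "s \<le> t"
    show "((\<lambda>s. g2 (x1 + s, x2 + z')) has_real_derivative a21 (x1 + s, x2 + z')) (at s)"
      using g2d inS[of s z'] s z' by (intro p1) auto
  qed
  then obtain w' where w': "0 < w'" "w' < t" "g2 (x1 + t, x2 + z') - g2 (x1, x2 + z') = t * a21 (x1 + w', x2 + z')"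
    by auto
  have e1: "D = t * (t * a12 (x1 + z, x2 + w))" using z(3) w(3) by simp
  have e2: "D = t * (t * a21 (x1 + w', x2 + z'))" using z'(3) w'(3) by simp
  have "t * (t * a12 (x1 + z, x2 + w)) = t * (t * a21 (x1 + w', x2 + z'))"
    using e1 e2 by metis
  then have "(t * t) * (a12 (x1 + z, x2 + w) - a21 (x1 + w', x2 + z')) = 0" by (simp add: algebra_simps)
  moreover have "t * t \<noteq> 0" using t by simp
  ultimately have eq: "a12 (x1 + z, x2 + w) = a21 (x1 + w', x2 + z')" by simp
  show ?thesis
    by (rule exI[of _ "(x1 + z, x2 + w)"], rule exI[of _ "(x1 + w', x2 + z')"])
       (use eq dist_box z w z' w' in auto)
qed




lemma schwarz:
  fixes h g1 g2 a11 a12 a21 a22 :: "real \<times> real \<Rightarrow> real"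
  assumes S: "open S" "x \<in> S"
    and hd: "\<forall>y\<in>S. (h has_derivative (\<lambda>v. g1 y * fst v + g2 y * snd v)) (at y)"
    and g1d: "\<forall>y\<in>S. (g1 has_derivative (\<lambda>v. a11 y * fst v + a12 y * snd v)) (at y)"
    and g2d: "\<forall>y\<in>S. (g2 has_derivative (\<lambda>v. a21 y * fst v + a22 y * snd v)) (at y)"
    and c12: "isCont a12 x" and c21: "isCont a21 x"
  shows "a12 x = a21 x"
proof (rule ccontr)
  assume ne: "a12 x \<noteq> a21 x"
  obtain x1 x2 where x: "x = (x1, x2)" by (cases x)
  obtain e0 where e0: "e0 > 0" "ball x e0 \<subseteq> S" using S open_contains_ball by blast
  define d where "d = \<bar>a12 x - a21 x\<bar>"
  have d: "d > 0" using ne by (simp add: d_def)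
  obtain \<delta>1 where \<delta>1: "\<delta>1 > 0" "\<And>p. dist p x < \<delta>1 \<Longrightarrow> dist (a12 p) (a12 x) < d / 2"
    using c12 d unfolding continuous_at_eps_delta by (meson half_gt_zero)
  obtain \<delta>2 where \<delta>2: "\<delta>2 > 0" "\<And>p. dist p x < \<delta>2 \<Longrightarrow> dist (a21 p) (a21 x) < d / 2"
    using c21 d unfolding continuous_at_eps_delta by (meson half_gt_zero)
  define t where "t = min e0 (min \<delta>1 \<delta>2) / 4"
  have t: "0 < t" "2 * t < e0" "2 * t < \<delta>1" "2 * t < \<delta>2" using e0 \<delta>1 \<delta>2 by (auto simp: t_def)
  obtain p q where pq: "dist p (x1, x2) \<le> 2 * t" "dist q (x1, x2) \<le> 2 * t" "a12 p = a21 q"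
    using schwarz_claim[of x1 x2 e0 S h g1 g2 a11 a12 a21 a22 t] e0 hd g1d g2d t x by auto
  have "dist p x < \<delta>1" using pq t x by auto
  then have "dist (a12 p) (a12 x) < d / 2" using \<delta>1 by blast
  moreover have "dist q x < \<delta>2" using pq t x by auto
  then have "dist (a21 q) (a21 x) < d / 2" using \<delta>2 by blast
  ultimately have "\<bar>a12 x - a21 x\<bar> < d" using pq(3) unfolding dist_real_def by arith
  then show False by (simp add: d_def)
qed

lemma chord_within:
  fixes \<phi> \<phi>' \<phi>'' :: "real \<Rightarrow> real"
  assumes d1: "\<forall>t\<in>{0..1}. (\<phi> has_real_derivative \<phi>' t) (at t within {0..1})"
    and d2: "\<forall>t\<in>{0..1}. (\<phi>' has_real_derivative \<phi>'' t) (at t within {0..1})"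
    and nn: "\<forall>t\<in>{0..1}. 0 \<le> \<phi>'' t"
    and t: "0 \<le> t" "t \<le> 1"
  shows "\<phi> t \<le> (1 - t) * \<phi> 0 + t * \<phi> 1"
proof (rule chord[OF _ _ _ t])
  show "continuous_on {0..1} \<phi>"
    using d1 by (metis DERIV_continuous continuous_on_eq_continuous_within)
  have at1: "(\<phi> has_real_derivative \<phi>' s) (at s)" if "0 < s" "s < 1" for s
  proof -
    have "(\<phi> has_real_derivative \<phi>' s) (at s within {0..1})" using d1 that by auto
    then show ?thesis using at_within_Icc_at[of 0 s 1] that by simp
  qed
  have at2: "(\<phi>' has_real_derivative \<phi>'' s) (at s)" if "0 < s" "s < 1" for s
  proof -
    have "(\<phi>' has_real_derivative \<phi>'' s) (at s within {0..1})" using d2 that by auto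
    then show ?thesis using at_within_Icc_at[of 0 s 1] that by simp
  qed
  show "\<forall>s. 0 < s \<and> s < 1 \<longrightarrow> (\<phi> has_real_derivative \<phi>' s) (at s)" using at1 by auto
  show "\<forall>a b. 0 < a \<and> a \<le> b \<and> b < 1 \<longrightarrow> \<phi>' a \<le> \<phi>' b"
  proof (intro allI impI)
    fix a b :: real assume ab: "0 < a \<and> a \<le> b \<and> b < 1"
    show "\<phi>' a \<le> \<phi>' b"
    proof (rule DERIV_nonneg_imp_increasing_open[of a b \<phi>'])
      show "a \<le> b" using ab by simp
      show "\<exists>y. (\<phi>' has_real_derivative y) (at x) \<and> 0 \<le> y" if "a < x" "x < b" for x
        using at2[of x] nn that ab by auto
      have "isCont \<phi>' s" if "a \<le> s" "s \<le> b" for s using at2[of s] that ab DERIV_isCont by auto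
      then show "continuous_on {a..b} \<phi>'" by (intro continuous_at_imp_continuous_on) auto
    qed
  qed
qed




lemma quad_comb:
  assumes "x \<in> quad" "y \<in> quad" "0 \<le> t" "t \<le> 1"
  shows "x + t *\<^sub>R (y - x) \<in> quad"
proof -
  have e: "fst (x + t *\<^sub>R (y - x)) = (1 - t) * fst x + t * fst y"
       "snd (x + t *\<^sub>R (y - x)) = (1 - t) * snd x + t * snd y" by (simp_all add: algebra_simps)
  have "0 \<le> (1 - t) * fst x + t * fst y" "0 \<le> (1 - t) * snd x + t * snd y"
    using assms by (auto simp: quad_def)
  then show ?thesis unfolding quad_def mem_Times_iff e by simp
qed

lemma convex_quad: "convex quad"
  unfolding quad_def by (intro convex_Times convex_real_interval)

lemma comp_deriv:
  fixes F g1 g2 :: "real \<times> real \<Rightarrow> real"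
  assumes "x \<in> quad" "y \<in> quad" "t \<in> {0..1}"
    and Fd: "(F has_derivative (\<lambda>w. g1 (x + t *\<^sub>R (y - x)) * fst w + g2 (x + t *\<^sub>R (y - x)) * snd w))
               (at (x + t *\<^sub>R (y - x)) within quad)"
  shows "((\<lambda>t. F (x + t *\<^sub>R (y - x))) has_real_derivative
           g1 (x + t *\<^sub>R (y - x)) * fst (y - x) + g2 (x + t *\<^sub>R (y - x)) * snd (y - x)) (at t within {0..1})"
proof -
  have pd: "((\<lambda>t. x + t *\<^sub>R (y - x)) has_derivative (\<lambda>s. s *\<^sub>R (y - x))) (at t within {0..1})"
    by (auto intro!: derivative_eq_intros)
  have sub: "(\<lambda>t. x + t *\<^sub>R (y - x)) ` {0..1} \<subseteq> quad"
    by (intro image_subsetI quad_comb[OF assms(1,2)]) auto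
  have "(F has_derivative (\<lambda>w. g1 (x + t *\<^sub>R (y - x)) * fst w + g2 (x + t *\<^sub>R (y - x)) * snd w))
               (at (x + t *\<^sub>R (y - x)) within (\<lambda>t. x + t *\<^sub>R (y - x)) ` {0..1})"
    by (rule has_derivative_subset[OF Fd sub])
  from has_derivative_in_compose[OF pd this] show ?thesis
    unfolding has_field_derivative_def by (rule has_derivative_eq_rhs) (auto simp: fun_eq_iff algebra_simps)
qed

lemma convex_hess:
  fixes \<Psi> g1 g2 a11 a12 a21 a22 :: "real \<times> real \<Rightarrow> real"
  assumes \<Psi>d: "\<forall>r\<in>quad. (\<Psi> has_derivative (\<lambda>w. g1 r * fst w + g2 r * snd w)) (at r within quad)"
    and g1d: "\<forall>r\<in>quad. (g1 has_derivative (\<lambda>w. a11 r * fst w + a12 r * snd w)) (at r within quad)"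
    and g2d: "\<forall>r\<in>quad. (g2 has_derivative (\<lambda>w. a21 r * fst w + a22 r * snd w)) (at r within quad)"
    and Q: "\<forall>r\<in>quad. \<forall>v1 v2. 0 \<le> v1 * (a11 r * v1 + a12 r * v2) + v2 * (a21 r * v1 + a22 r * v2)"
  shows "convex_on quad \<Psi>"
  unfolding convex_on_def
proof (intro conjI convex_quad ballI allI impI)
  fix x y :: "real \<times> real" and u v :: real assume xy: "x \<in> quad" "y \<in> quad" and uv: "0 \<le> u" "0 \<le> v" "u + v = 1"
  define p where "p t = x + t *\<^sub>R (y - x)" for t
  define \<phi> where "\<phi> t = \<Psi> (p t)" for t
  define \<phi>' where "\<phi>' t = g1 (p t) * fst (y - x) + g2 (p t) * snd (y - x)" for t
  define \<phi>'' where "\<phi>'' t = fst (y - x) * (a11 (p t) * fst (y - x) + a12 (p t) * snd (y - x))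
      + snd (y - x) * (a21 (p t) * fst (y - x) + a22 (p t) * snd (y - x))" for t
  have pq: "p t \<in> quad" if "t \<in> {0..1}" for t using quad_comb xy that by (auto simp: p_def)
  have ch: "\<phi> v \<le> (1 - v) * \<phi> 0 + v * \<phi> 1"
  proof (rule chord_within[where \<phi>' = \<phi>' and \<phi>'' = \<phi>''])
    show "\<forall>t\<in>{0..1}. (\<phi> has_real_derivative \<phi>' t) (at t within {0..1})"
      unfolding \<phi>_def \<phi>'_def p_def using comp_deriv[OF xy] \<Psi>d pq[unfolded p_def] by blast
    show "\<forall>t\<in>{0..1}. (\<phi>' has_real_derivative \<phi>'' t) (at t within {0..1})"
    proof
      fix t :: real assume t: "t \<in> {0..1}"
      have A: "((\<lambda>t. g1 (p t)) has_real_derivative a11 (p t) * fst (y - x) + a12 (p t) * snd (y - x)) (at t within {0..1})"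
        unfolding p_def using comp_deriv[OF xy t] g1d pq[OF t, unfolded p_def] by blast
      have B: "((\<lambda>t. g2 (p t)) has_real_derivative a21 (p t) * fst (y - x) + a22 (p t) * snd (y - x)) (at t within {0..1})"
        unfolding p_def using comp_deriv[OF xy t] g2d pq[OF t, unfolded p_def] by blast
      have "(\<phi>' has_real_derivative (a11 (p t) * fst (y - x) + a12 (p t) * snd (y - x)) * fst (y - x)
              + (a21 (p t) * fst (y - x) + a22 (p t) * snd (y - x)) * snd (y - x)) (at t within {0..1})"
        unfolding \<phi>'_def by (intro DERIV_add DERIV_cmult_right A B)
      then show "(\<phi>' has_real_derivative \<phi>'' t) (at t within {0..1})"
        unfolding \<phi>''_def by (simp add: algebra_simps)
    qed
    show "\<forall>t\<in>{0..1}. 0 \<le> \<phi>'' t" using Q pq unfolding \<phi>''_def by blast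
    show "0 \<le> v" "v \<le> 1" using uv by auto
  qed
  have pv: "p v = u *\<^sub>R x + v *\<^sub>R y" using uv
    by (simp add: p_def algebra_simps) (metis add_diff_cancel_right' scaleR_collapse)
  have "1 - v = u" using uv by simp
  then show "\<Psi> (u *\<^sub>R x + v *\<^sub>R y) \<le> u * \<Psi> x + v * \<Psi> y"
    using ch pv by (simp add: \<phi>_def p_def)
qed




lemma lin3: "- ((A::real) / 2) \<le> a \<Longrightarrow> - (B / 2) \<le> b \<Longrightarrow> - ((A + B) / 2) \<le> c \<Longrightarrow> 0 \<le> A + B + a + b + c"
  by (simp add: field_simps)

lemma Qlemma:
  fixes f1 f2 v1 v2 d11 d22 X k11 k22 k12 k21 \<epsilon> :: real
  assumes f: "0 \<le> f1" "0 \<le> f2"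
    and b11: "\<bar>d11\<bar> \<le> k11 * f1" and b22: "\<bar>d22\<bar> \<le> k22 * f2"
    and bX: "X\<^sup>2 \<le> k12 * k21 * f1 * f2"
    and k: "0 < k11" "0 < k22" "0 < k12" "0 < k21"
    and e: "0 < \<epsilon>" "\<epsilon> * (4 * (k11 + k22 + k12 + k21)) \<le> 1"
  shows "0 \<le> v1 * ((f1 + 2 * \<epsilon> * d11) * v1 + 2 * \<epsilon> * X * v2) + v2 * (2 * \<epsilon> * X * v1 + (f2 + 2 * \<epsilon> * d22) * v2)"
proof -
  define A where "A = f1 * v1\<^sup>2"
  define B where "B = f2 * v2\<^sup>2"
  have AB: "0 \<le> A" "0 \<le> B" using f by (auto simp: A_def B_def)
  have p: "0 < \<epsilon>*k11" "0 < \<epsilon>*k22" "0 < \<epsilon>*k12" "0 < \<epsilon>*k21" using e k by auto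
  have "\<epsilon> * (4 * (k11 + k22 + k12 + k21)) = 4*(\<epsilon>*k11) + 4*(\<epsilon>*k22) + 4*(\<epsilon>*k12) + 4*(\<epsilon>*k21)"
    by (simp add: algebra_simps)
  then have ek: "\<epsilon> * k11 \<le> 1/4" "\<epsilon> * k22 \<le> 1/4" "\<epsilon> * (k12 + k21) \<le> 1/4"
    using e p by (simp_all add: distrib_left)
  have t1: "\<bar>2 * \<epsilon> * d11 * v1\<^sup>2\<bar> \<le> A / 2"
  proof -
    have "\<bar>2 * \<epsilon> * d11 * v1\<^sup>2\<bar> = 2 * \<epsilon> * \<bar>d11\<bar> * v1\<^sup>2" using e by (simp add: abs_mult)
    also have "\<dots> \<le> 2 * \<epsilon> * (k11 * f1) * v1\<^sup>2" using b11 e by (intro mult_right_mono mult_left_mono) auto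
    also have "\<dots> = 2 * (\<epsilon> * k11) * A" by (simp add: A_def)
    also have "\<dots> \<le> 2 * (1/4) * A" using ek AB by (intro mult_right_mono mult_left_mono) auto
    finally show ?thesis by simp
  qed
  have t2: "\<bar>2 * \<epsilon> * d22 * v2\<^sup>2\<bar> \<le> B / 2"
  proof -
    have "\<bar>2 * \<epsilon> * d22 * v2\<^sup>2\<bar> = 2 * \<epsilon> * \<bar>d22\<bar> * v2\<^sup>2" using e by (simp add: abs_mult)
    also have "\<dots> \<le> 2 * \<epsilon> * (k22 * f2) * v2\<^sup>2" using b22 e by (intro mult_right_mono mult_left_mono) auto
    also have "\<dots> = 2 * (\<epsilon> * k22) * B" by (simp add: B_def)
    also have "\<dots> \<le> 2 * (1/4) * B" using ek AB by (intro mult_right_mono mult_left_mono) auto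
    finally show ?thesis by simp
  qed
  have t3: "\<bar>4 * \<epsilon> * X * v1 * v2\<bar> \<le> (A + B) / 2"
  proof -
    have "(4 * \<epsilon> * X * v1 * v2)\<^sup>2 = 16 * \<epsilon>\<^sup>2 * X\<^sup>2 * (v1\<^sup>2 * v2\<^sup>2)" by (simp add: power_mult_distrib)
    also have "\<dots> \<le> 16 * \<epsilon>\<^sup>2 * (k12 * k21 * f1 * f2) * (v1\<^sup>2 * v2\<^sup>2)"
      using bX by (intro mult_right_mono mult_left_mono) auto
    also have "\<dots> = 16 * (\<epsilon>\<^sup>2 * (k12 * k21)) * (A * B)" by (simp add: A_def B_def power2_eq_square)
    also have "\<dots> \<le> 16 * (1/16) * (A * B)"
    proof -
      have "k12 * k21 \<le> (k12 + k21)\<^sup>2" using k by (simp add: power2_eq_square algebra_simps)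
      then have "\<epsilon>\<^sup>2 * (k12 * k21) \<le> \<epsilon>\<^sup>2 * (k12 + k21)\<^sup>2" by (intro mult_left_mono) auto
      also have "\<dots> = (\<epsilon> * (k12 + k21))\<^sup>2" by (simp add: power_mult_distrib)
      also have "\<dots> \<le> (1/4)\<^sup>2" using ek e k by (intro power_mono) auto
      finally have "\<epsilon>\<^sup>2 * (k12 * k21) \<le> 1/16" by (simp add: power2_eq_square)
      then show ?thesis using AB by (intro mult_right_mono mult_left_mono) auto
    qed
    also have "\<dots> \<le> ((A + B) / 2)\<^sup>2"
    proof -
      have "0 \<le> (A - B)\<^sup>2" by simp
      then show ?thesis by (simp add: power2_eq_square algebra_simps)
    qed
    finally have "(4 * \<epsilon> * X * v1 * v2)\<^sup>2 \<le> ((A + B) / 2)\<^sup>2" .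
    then have "\<bar>4 * \<epsilon> * X * v1 * v2\<bar> \<le> \<bar>(A + B) / 2\<bar>" using abs_le_square_iff by blast
    then show ?thesis using AB by simp
  qed
  have eq: "v1 * ((f1 + 2 * \<epsilon> * d11) * v1 + 2 * \<epsilon> * X * v2) + v2 * (2 * \<epsilon> * X * v1 + (f2 + 2 * \<epsilon> * d22) * v2)
      = A + B + 2 * \<epsilon> * d11 * v1\<^sup>2 + 2 * \<epsilon> * d22 * v2\<^sup>2 + 4 * \<epsilon> * X * v1 * v2"
    by (simp add: A_def B_def power2_eq_square algebra_simps)
  have "- (A / 2) \<le> 2 * \<epsilon> * d11 * v1\<^sup>2" "- (B / 2) \<le> 2 * \<epsilon> * d22 * v2\<^sup>2"
     "- ((A + B) / 2) \<le> 4 * \<epsilon> * X * v1 * v2" using t1 t2 t3 by linarith+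
  then show ?thesis unfolding eq by (rule lin3)
qed

lemma twice0:
  fixes \<psi> \<psi>' \<psi>'' :: "real \<Rightarrow> real"
  assumes d1: "\<forall>x\<ge>0. (\<psi> has_real_derivative \<psi>' x) (at x within {0..})"
    and d2: "\<forall>x\<ge>0. (\<psi>' has_real_derivative \<psi>'' x) (at x within {0..})"
    and nn: "\<forall>x>0. 0 \<le> \<psi>'' x" and z: "\<psi> 0 = 0" "\<psi>' 0 = 0" and r: "0 \<le> r"
  shows "0 \<le> \<psi> r"
proof -
  have "\<psi>' 0 \<le> \<psi>' x" if "0 \<le> x" for x
    by (rule mono0[OF d2 _ that]) (use nn in auto)
  then have "\<psi> 0 \<le> \<psi> r" using z by (intro mono0[OF d1 _ r]) auto
  then show ?thesis using z by simp
qed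

lemma Sint_closure: "closure ({0<..} \<times> {0<..}) = quad"
  by (simp add: closure_Times quad_def)

lemma Sint_interior: "interior quad = {0<..} \<times> {0::real<..}"
  by (simp add: interior_Times quad_def)

lemma ext_quad:
  fixes g :: "real \<times> real \<Rightarrow> real"
  assumes c: "continuous_on quad g" and p: "\<And>a b. 0 < a \<Longrightarrow> 0 < b \<Longrightarrow> 0 \<le> g (a, b)" and r: "r \<in> quad"
  shows "0 \<le> g r"
proof (rule continuous_ge_on_closure[where S = "{0<..} \<times> {0<..}"])
  show "continuous_on (closure ({0<..} \<times> {0<..})) g" using c Sint_closure by simp
  show "r \<in> closure ({0<..} \<times> {0<..})" using r Sint_closure by simp
  show "\<And>x. x \<in> {0<..} \<times> {0<..} \<Longrightarrow> 0 \<le> g x" using p by auto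
qed

lemma fst_deriv:
  fixes f :: "real \<Rightarrow> real"
  assumes "(f has_real_derivative D) (at (fst r) within {0..})" "r \<in> quad"
  shows "((\<lambda>r. f (fst r)) has_derivative (\<lambda>w. D * fst w)) (at r within quad)"
proof -
  have "(fst has_derivative fst) (at r within quad)" by (rule has_derivative_fst[OF has_derivative_ident])
  moreover have "(f has_derivative (*) D) (at (fst r) within fst ` quad)"
    using has_derivative_subset[OF assms(1)[unfolded has_field_derivative_def]] by (auto simp: quad_def)
  ultimately show ?thesis using has_derivative_in_compose[of fst fst r quad f] by simp
qed

lemma snd_deriv:
  fixes f :: "real \<Rightarrow> real"
  assumes "(f has_real_derivative D) (at (snd r) within {0..})" "r \<in> quad"
  shows "((\<lambda>r. f (snd r)) has_derivative (\<lambda>w. D * snd w)) (at r within quad)"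
proof -
  have "(snd has_derivative snd) (at r within quad)" by (rule has_derivative_snd[OF has_derivative_ident])
  moreover have "(f has_derivative (*) D) (at (snd r) within snd ` quad)"
    using has_derivative_subset[OF assms(1)[unfolded has_field_derivative_def]] by (auto simp: quad_def)
  ultimately show ?thesis using has_derivative_in_compose[of snd snd r quad f] by simp
qed




context onefun begin
lemma fdd_nonneg: "0 \<le> r \<Longrightarrow> 0 \<le> fdd r"
proof (cases "r = 0")
  case True
  have "0 \<le> m * rpow 0 \<beta>" using mM by (simp add: rpow_def)
  then show ?thesis using loc[rule_format, of 0] r0 True by auto
next
  case False
  assume "0 \<le> r" then have "0 < r" using False by simp
  then show ?thesis using fdd_pos less_imp_le by blast
qed

lemma G_fd': "0 \<le> r \<Longrightarrow> inv_into {0..} fd (fd r) = r"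
  using G_fd unfolding G_def .

lemma G_deriv': "0 < r \<Longrightarrow> (inv_into {0..} fd has_real_derivative inverse (fdd r)) (at (fd r))"
  using G_deriv unfolding G_def .
end

lemma quad_fst: "r \<in> quad \<Longrightarrow> 0 \<le> fst r"
  by (cases r) (simp add: quad_def)
lemma quad_snd: "r \<in> quad \<Longrightarrow> 0 \<le> snd r"
  by (cases r) (simp add: quad_def)

lemma Min4_le1: "Min {1, a, b, c} \<le> (1::real)"
  by (rule Min.coboundedI) auto
lemma Min4_le4: "Min {1, a, b, c} \<le> (c::real)"
  by (rule Min.coboundedI) auto

theorem proposition2p4:
  fixes F Fd Fdd :: "nat \<Rightarrow> real \<Rightarrow> real"
    and m M \<beta> :: "nat \<Rightarrow> real" and r0 :: real
    and h :: "real \<times> real \<Rightarrow> real"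
    and dh :: "nat \<Rightarrow> real \<times> real \<Rightarrow> real"
    and dhh :: "nat \<Rightarrow> nat \<Rightarrow> real \<times> real \<Rightarrow> real"
    and thd :: "nat \<Rightarrow> nat \<Rightarrow> real \<times> real \<Rightarrow> real"
    and \<kappa> :: "nat \<Rightarrow> nat \<Rightarrow> real"
  assumes
    \<comment> \<open>(F)\<close>
    F_nonneg: "\<forall>j\<in>{1,2}. \<forall>r\<ge>0. F j r \<ge> 0"
    and F_deriv: "\<forall>j\<in>{1,2}. \<forall>r\<ge>0. (F j has_real_derivative Fd j r) (at r within {0..})"
    and Fd_deriv: "\<forall>j\<in>{1,2}. \<forall>r\<ge>0. (Fd j has_real_derivative Fdd j r) (at r within {0..})"
    and Fdd_cont: "\<forall>j\<in>{1,2}. continuous_on {0..} (Fdd j)"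
    and Fdd_pos: "\<forall>j\<in>{1,2}. \<forall>r>0. Fdd j r > 0"
    and F_zero: "\<forall>j\<in>{1,2}. F j 0 = 0 \<and> Fd j 0 = 0"
    and Fdd_liminf: "\<forall>j\<in>{1,2}. \<exists>c>0. eventually (\<lambda>r. Fdd j r \<ge> c) at_top"
    and Fd_F_limsup: "\<forall>j\<in>{1,2}. \<exists>C. eventually (\<lambda>r. Fd j r / F j r \<le> C) at_top"
    and r0_pos: "r0 > 0"
    and mM_pos: "\<forall>j\<in>{1,2}. m j > 0 \<and> M j > 0 \<and> \<beta> j \<ge> 0"
    and Fdd_local: "\<forall>j\<in>{1,2}. \<forall>r. 0 \<le> r \<and> r \<le> r0 \<longrightarrow>
                       m j * rpow r (\<beta> j) \<le> Fdd j r \<and> Fdd j r \<le> M j * rpow r (\<beta> j)"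
    and F_ineq: "\<forall>j\<in>{1,2}. \<forall>r\<ge>0. F j r - r * Fd j r + r\<^sup>2 * Fdd j r \<ge> 0"
    \<comment> \<open>(h): C^2 on the closed quadrant, dh j = partial_{r_j} h, dhh j i = partial_{r_i} partial_{r_j} h\<close>
    and h_deriv: "\<forall>x\<in>quad. (h has_derivative (\<lambda>v. dh 1 x * fst v + dh 2 x * snd v)) (at x within quad)"
    and hd_deriv: "\<forall>j\<in>{1,2}. \<forall>x\<in>quad.
                     (dh j has_derivative (\<lambda>v. dhh j 1 x * fst v + dhh j 2 x * snd v)) (at x within quad)"
    and hdd_cont: "\<forall>i\<in>{1,2}. \<forall>j\<in>{1,2}. continuous_on quad (dhh j i)"
    and h_vanish: "\<forall>x\<in>quad. fst x = 0 \<or> snd x = 0 \<longrightarrow> h x = 0 \<and> dh 1 x = 0 \<and> dh 2 x = 0"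
    \<comment> \<open>theta_{j,i} = partial_{u_i} theta_j (in the open quadrant; boundary values by continuity)\<close>
    and thd_deriv: "\<forall>i\<in>{1,2}. \<forall>j\<in>{1,2}. \<forall>u. fst u > 0 \<and> snd u > 0 \<longrightarrow>
                     ((\<lambda>t. theta dh Fd j (upd_coord i u t)) has_real_derivative thd j i u) (at (coord i u))"
    \<comment> \<open>(theta)\<close>
    and thd_loclip: "\<forall>i\<in>{1,2}. \<forall>j\<in>{1,2}. \<forall>u\<in>quad. \<exists>e>0. \<exists>L. L-lipschitz_on (cball u e \<inter> quad) (thd j i)"
    and kappa_pos: "\<forall>i\<in>{1,2}. \<forall>j\<in>{1,2}. \<kappa> j i > 0"
    and thd_bound: "\<forall>i\<in>{1,2}. \<forall>j\<in>{1,2}. \<forall>u\<in>quad.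
        \<bar>thd j i u\<bar> \<le> \<kappa> j i * Min {1, fst u, snd u,
            sqrt (inv_into {0..} (Fd i) (coord i u) / inv_into {0..} (Fd j) (coord j u))}"
  shows
    "(\<exists>\<epsilon>0>0.
        (\<forall>\<epsilon>. 0 < \<epsilon> \<and> \<epsilon> \<le> \<epsilon>0 \<longrightarrow>
           convex_on quad (\<lambda>r. F 1 (fst r) + F 2 (snd r) + 2 * \<epsilon> * h r) \<and>
           (\<epsilon> < \<epsilon>0 \<longrightarrow> strict_convex_on quad (\<lambda>r. F 1 (fst r) + F 2 (snd r) + 2 * \<epsilon> * h r)))
      \<and> (\<forall>r\<in>quad. \<forall>\<epsilon>. 0 < \<epsilon> \<and> \<epsilon> \<le> \<epsilon>0 \<longrightarrow>
           F 1 (fst r) / 2 + F 2 (snd r) / 2 \<le> F 1 (fst r) + F 2 (snd r) + \<epsilon> * h r \<and>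
           F 1 (fst r) + F 2 (snd r) + \<epsilon> * h r
             \<le> (1 + \<epsilon> / 2 * \<kappa> 1 1) * F 1 (fst r) + (1 + \<epsilon> / 2 * \<kappa> 2 2) * F 2 (snd r)))
   \<and> (\<forall>j\<in>{1,2}. \<forall>r. 0 \<le> r \<and> r \<le> r0 \<longrightarrow>
        m j / (\<beta> j + 1) * r powr (\<beta> j + 1) \<le> Fd j r \<and>
        Fd j r \<le> M j / (\<beta> j + 1) * r powr (\<beta> j + 1) \<and>
        m j / ((\<beta> j + 1) * (\<beta> j + 2)) * r powr (\<beta> j + 2) \<le> F j r \<and>
        F j r \<le> M j / ((\<beta> j + 1) * (\<beta> j + 2)) * r powr (\<beta> j + 2))
   \<and> (\<forall>j\<in>{1,2}. \<exists>\<alpha>. \<forall>r\<ge>0. Fd j r \<le> \<alpha> * (min 1 r + F j r))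
   \<and> (\<forall>H>0. \<exists>\<beta>H>0. \<forall>rb\<in>quad. \<forall>r\<in>quad. \<forall>i\<in>{1,2}. \<forall>j\<in>{1,2}.
        fst rb \<le> H \<and> snd rb \<le> H \<longrightarrow>
        max (fst r) (snd r) * (thd j i (Fd 1 (fst r), Fd 2 (snd r)) - thd j i (Fd 1 (fst rb), Fd 2 (snd rb)))\<^sup>2
          \<le> \<beta>H * (bregman (F 1) (Fd 1) (fst r) (fst rb) + bregman (F 2) (Fd 2) (snd r) (snd rb)))"
proof -
  interpret O1: onefun "F 1" "Fd 1" "Fdd 1" "m 1" "M 1" "\<beta> 1" r0
    by unfold_locales (use F_nonneg F_deriv Fd_deriv Fdd_cont Fdd_pos F_zero Fdd_liminf Fd_F_limsup
        r0_pos mM_pos Fdd_local in auto)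
  interpret O2: onefun "F 2" "Fd 2" "Fdd 2" "m 2" "M 2" "\<beta> 2" r0
    by unfold_locales (use F_nonneg F_deriv Fd_deriv Fdd_cont Fdd_pos F_zero Fdd_liminf Fd_F_limsup
        r0_pos mM_pos Fdd_local in auto)
  have P3: "\<forall>j\<in>{1,2}. \<forall>r. 0 \<le> r \<and> r \<le> r0 \<longrightarrow>
        m j / (\<beta> j + 1) * r powr (\<beta> j + 1) \<le> Fd j r \<and>
        Fd j r \<le> M j / (\<beta> j + 1) * r powr (\<beta> j + 1) \<and>
        m j / ((\<beta> j + 1) * (\<beta> j + 2)) * r powr (\<beta> j + 2) \<le> F j r \<and>
        F j r \<le> M j / ((\<beta> j + 1) * (\<beta> j + 2)) * r powr (\<beta> j + 2)"
    using O1.part3a O1.part3b O2.part3a O2.part3b by auto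
  have P4: "\<forall>j\<in>{1,2}. \<exists>\<alpha>. \<forall>r\<ge>0. Fd j r \<le> \<alpha> * (min 1 r + F j r)"
    using O1.part4 O2.part4 by auto

  have intq: "(r1, r2) \<in> interior quad" if "0 < r1" "0 < r2" for r1 r2 :: real
    using that Sint_interior by auto
  have inq: "(r1, r2) \<in> quad" if "0 \<le> r1" "0 \<le> r2" for r1 r2 :: real
    using that by (auto simp: quad_def)
  have hd_at: "(dh j has_derivative (\<lambda>v. dhh j 1 (r1, r2) * fst v + dhh j 2 (r1, r2) * snd v)) (at (r1, r2))"
    if "j \<in> {1,2}" "0 < r1" "0 < r2" for j r1 r2
    using hd_deriv that intq[OF that(2,3)] inq[of r1 r2] at_within_interior[OF intq[OF that(2,3)]] by auto
  have h_at: "(h has_derivative (\<lambda>v. dh 1 (r1, r2) * fst v + dh 2 (r1, r2) * snd v)) (at (r1, r2))"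
    if "0 < r1" "0 < r2" for r1 r2
    using h_deriv that inq[of r1 r2] at_within_interior[OF intq[OF that]] by auto

  have rel1: "thd j 1 (Fd 1 r1, Fd 2 r2) = dhh j 1 (r1, r2) * inverse (Fdd 1 r1)"
    if j: "j \<in> {1,2}" and r: "0 < r1" "0 < r2" for j r1 r2
  proof -
    let ?u = "(Fd 1 r1, Fd 2 r2)"
    have u: "fst ?u > 0 \<and> snd ?u > 0" using O1.fd_pos O2.fd_pos r by auto
    have D1: "((\<lambda>t. theta dh Fd j (upd_coord 1 ?u t)) has_real_derivative thd j 1 ?u) (at (coord 1 ?u))"
      using thd_deriv j u by blast
    have eqf: "(\<lambda>t. theta dh Fd j (upd_coord 1 ?u t)) = (\<lambda>t. dh j (inv_into {0..} (Fd 1) t, r2))"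
      using O2.G_fd'[of r2] r by (auto simp: theta_def upd_coord_def fun_eq_iff)
    have hp: "((\<lambda>s. dh j (s, r2)) has_real_derivative dhh j 1 (r1, r2)) (at (inv_into {0..} (Fd 1) (Fd 1 r1)))"
      using p1[of "dh j" "dhh j 1 (r1, r2)" "dhh j 2 (r1, r2)" 0 r1 r2] hd_at[OF j r] O1.G_fd'[of r1] r by simp
    have "((\<lambda>t. dh j (inv_into {0..} (Fd 1) t, r2)) has_real_derivative dhh j 1 (r1, r2) * inverse (Fdd 1 r1))
            (at (Fd 1 r1))"
      using DERIV_chain2[OF hp O1.G_deriv'[OF r(1)]] by simp
    then show ?thesis using D1 eqf DERIV_unique by (fastforce simp: coord_def)
  qed
  have rel2: "thd j 2 (Fd 1 r1, Fd 2 r2) = dhh j 2 (r1, r2) * inverse (Fdd 2 r2)"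
    if j: "j \<in> {1,2}" and r: "0 < r1" "0 < r2" for j r1 r2
  proof -
    let ?u = "(Fd 1 r1, Fd 2 r2)"
    have u: "fst ?u > 0 \<and> snd ?u > 0" using O1.fd_pos O2.fd_pos r by auto
    have D1: "((\<lambda>t. theta dh Fd j (upd_coord 2 ?u t)) has_real_derivative thd j 2 ?u) (at (coord 2 ?u))"
      using thd_deriv j u by blast
    have eqf: "(\<lambda>t. theta dh Fd j (upd_coord 2 ?u t)) = (\<lambda>t. dh j (r1, inv_into {0..} (Fd 2) t))"
      using O1.G_fd'[of r1] r by (auto simp: theta_def upd_coord_def fun_eq_iff)
    have hp: "((\<lambda>s. dh j (r1, s)) has_real_derivative dhh j 2 (r1, r2)) (at (inv_into {0..} (Fd 2) (Fd 2 r2)))"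
      using p2[of "dh j" "dhh j 1 (r1, r2)" "dhh j 2 (r1, r2)" r1 0 r2] hd_at[OF j r] O2.G_fd'[of r2] r by simp
    have "((\<lambda>t. dh j (r1, inv_into {0..} (Fd 2) t)) has_real_derivative dhh j 2 (r1, r2) * inverse (Fdd 2 r2))
            (at (Fd 2 r2))"
      using DERIV_chain2[OF hp O2.G_deriv'[OF r(2)]] by simp
    then show ?thesis using D1 eqf DERIV_unique by (fastforce simp: coord_def)
  qed

  have uq: "(Fd 1 r1, Fd 2 r2) \<in> quad" if "0 \<le> r1" "0 \<le> r2" for r1 r2
    using O1.fd_nonneg O2.fd_nonneg that by (auto simp: quad_def)
  have thd_le_kappa: "\<bar>thd j i u\<bar> \<le> \<kappa> j i" if "i \<in> {1,2}" "j \<in> {1,2}" "u \<in> quad" for i j u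
  proof -
    have "\<bar>thd j i u\<bar> \<le> \<kappa> j i * Min {1, fst u, snd u,
            sqrt (inv_into {0..} (Fd i) (coord i u) / inv_into {0..} (Fd j) (coord j u))}"
      using thd_bound that by blast
    also have "\<dots> \<le> \<kappa> j i * 1" using kappa_pos that by (intro mult_left_mono Min4_le1) auto
    finally show ?thesis by simp
  qed
  have thd_le_sqrt: "\<bar>thd j i (Fd 1 r1, Fd 2 r2)\<bar> \<le> \<kappa> j i *
       sqrt (coord i (r1, r2) / coord j (r1, r2))"
    if "i \<in> {1,2}" "j \<in> {1,2}" "0 \<le> r1" "0 \<le> r2" for i j r1 r2
  proof -
    let ?u = "(Fd 1 r1, Fd 2 r2)"
    have "\<bar>thd j i ?u\<bar> \<le> \<kappa> j i * Min {1, fst ?u, snd ?u,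
            sqrt (inv_into {0..} (Fd i) (coord i ?u) / inv_into {0..} (Fd j) (coord j ?u))}"
      using thd_bound that uq[OF that(3,4)] by blast
    also have "\<dots> \<le> \<kappa> j i * sqrt (inv_into {0..} (Fd i) (coord i ?u) / inv_into {0..} (Fd j) (coord j ?u))"
      using kappa_pos that by (intro mult_left_mono Min4_le4) auto
    also have "inv_into {0..} (Fd i) (coord i ?u) = coord i (r1, r2)"
      using that O1.G_fd' O2.G_fd' by (auto simp: coord_def)
    also have "inv_into {0..} (Fd j) (coord j ?u) = coord j (r1, r2)"
      using that O1.G_fd' O2.G_fd' by (auto simp: coord_def)
    finally show ?thesis .
  qed
  have Fdd1p: "0 < Fdd 1 r" if "0 < r" for r using Fdd_pos that by auto
  have Fdd2p: "0 < Fdd 2 r" if "0 < r" for r using Fdd_pos that by auto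
  have i11: "\<bar>dhh 1 1 (r1, r2)\<bar> \<le> \<kappa> 1 1 * Fdd 1 r1" if r: "0 < r1" "0 < r2" for r1 r2
  proof -
    have "dhh 1 1 (r1, r2) = thd 1 1 (Fd 1 r1, Fd 2 r2) * Fdd 1 r1"
      using rel1[of 1 r1 r2] r Fdd1p[OF r(1)] by (simp add: field_simps)
    moreover have "\<bar>thd 1 1 (Fd 1 r1, Fd 2 r2)\<bar> \<le> \<kappa> 1 1" using thd_le_kappa uq r by auto
    ultimately show ?thesis using Fdd1p[OF r(1)] by (simp add: abs_mult mult_right_mono)
  qed
  have i22: "\<bar>dhh 2 2 (r1, r2)\<bar> \<le> \<kappa> 2 2 * Fdd 2 r2" if r: "0 < r1" "0 < r2" for r1 r2
  proof -
    have "dhh 2 2 (r1, r2) = thd 2 2 (Fd 1 r1, Fd 2 r2) * Fdd 2 r2"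
      using rel2[of 2 r1 r2] r Fdd2p[OF r(2)] by (simp add: field_simps)
    moreover have "\<bar>thd 2 2 (Fd 1 r1, Fd 2 r2)\<bar> \<le> \<kappa> 2 2" using thd_le_kappa uq r by auto
    ultimately show ?thesis using Fdd2p[OF r(2)] by (simp add: abs_mult mult_right_mono)
  qed
  have i12: "\<bar>dhh 1 2 (r1, r2)\<bar> * \<bar>dhh 2 1 (r1, r2)\<bar> \<le> \<kappa> 1 2 * \<kappa> 2 1 * Fdd 1 r1 * Fdd 2 r2"
    if r: "0 < r1" "0 < r2" for r1 r2
  proof -
    have e1: "dhh 1 2 (r1, r2) = thd 1 2 (Fd 1 r1, Fd 2 r2) * Fdd 2 r2"
      using rel2[of 1 r1 r2] r Fdd2p[OF r(2)] by (simp add: field_simps)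
    have e2: "dhh 2 1 (r1, r2) = thd 2 1 (Fd 1 r1, Fd 2 r2) * Fdd 1 r1"
      using rel1[of 2 r1 r2] r Fdd1p[OF r(1)] by (simp add: field_simps)
    have b1: "\<bar>thd 1 2 (Fd 1 r1, Fd 2 r2)\<bar> \<le> \<kappa> 1 2 * sqrt (r2 / r1)"
      using thd_le_sqrt[of 2 1 r1 r2] r by (simp add: coord_def)
    have b2: "\<bar>thd 2 1 (Fd 1 r1, Fd 2 r2)\<bar> \<le> \<kappa> 2 1 * sqrt (r1 / r2)"
      using thd_le_sqrt[of 1 2 r1 r2] r by (simp add: coord_def)
    have "\<bar>thd 1 2 (Fd 1 r1, Fd 2 r2)\<bar> * \<bar>thd 2 1 (Fd 1 r1, Fd 2 r2)\<bar>
          \<le> (\<kappa> 1 2 * sqrt (r2 / r1)) * (\<kappa> 2 1 * sqrt (r1 / r2))"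
    proof (intro mult_mono b1 b2)
      show "0 \<le> \<kappa> 1 2 * sqrt (r2 / r1)" using kappa_pos r by auto
    qed auto
    also have "\<dots> = \<kappa> 1 2 * \<kappa> 2 1 * (sqrt (r2 / r1) * sqrt (r1 / r2))" by (simp add: algebra_simps)
    also have "sqrt (r2 / r1) * sqrt (r1 / r2) = 1" using r by (simp add: real_sqrt_mult[symmetric])
    finally have "\<bar>thd 1 2 (Fd 1 r1, Fd 2 r2)\<bar> * \<bar>thd 2 1 (Fd 1 r1, Fd 2 r2)\<bar> \<le> \<kappa> 1 2 * \<kappa> 2 1" by simp
    then have "\<bar>thd 1 2 (Fd 1 r1, Fd 2 r2)\<bar> * \<bar>thd 2 1 (Fd 1 r1, Fd 2 r2)\<bar> * (Fdd 1 r1 * Fdd 2 r2)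
        \<le> \<kappa> 1 2 * \<kappa> 2 1 * (Fdd 1 r1 * Fdd 2 r2)"
      using Fdd1p[OF r(1)] Fdd2p[OF r(2)] by (intro mult_right_mono) auto
    then show ?thesis unfolding e1 e2 using Fdd1p[OF r(1)] Fdd2p[OF r(2)] by (simp add: abs_mult algebra_simps)
  qed

  have sym_int: "dhh 1 2 (r1, r2) = dhh 2 1 (r1, r2)" if r: "0 < r1" "0 < r2" for r1 r2
  proof -
    have o: "open ({0::real<..} \<times> {0::real<..})" by (intro open_Times open_greaterThan)
    have m: "(r1, r2) \<in> {0<..} \<times> {0<..}" using r by auto
    have a: "\<forall>y\<in>{0<..} \<times> {0<..}. (h has_derivative (\<lambda>v. dh 1 y * fst v + dh 2 y * snd v)) (at y)"
      using h_at by auto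
    have b: "\<forall>y\<in>{0<..} \<times> {0<..}. (dh 1 has_derivative (\<lambda>v. dhh 1 1 y * fst v + dhh 1 2 y * snd v)) (at y)"
      using hd_at[of 1] by auto
    have c: "\<forall>y\<in>{0<..} \<times> {0<..}. (dh 2 has_derivative (\<lambda>v. dhh 2 1 y * fst v + dhh 2 2 y * snd v)) (at y)"
      using hd_at[of 2] by auto
    have d: "isCont (dhh 1 2) (r1, r2)" using continuous_on_interior hdd_cont intq[OF r] by auto
    have e: "isCont (dhh 2 1) (r1, r2)" using continuous_on_interior hdd_cont intq[OF r] by auto
    show ?thesis by (rule schwarz[OF o m a b c d e])
  qed

  have cF1: "continuous_on quad (\<lambda>r. Fdd 1 (fst r))"
    by (rule continuous_on_compose2[OF O1.fdd_cont continuous_on_fst]) (auto simp: quad_def)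
  have cF2: "continuous_on quad (\<lambda>r. Fdd 2 (snd r))"
    by (rule continuous_on_compose2[OF O2.fdd_cont continuous_on_snd]) (auto simp: quad_def)
  have cH: "continuous_on quad (dhh j i)" if "i \<in> {1,2}" "j \<in> {1,2}" for i j using hdd_cont that by auto
  have q11: "\<bar>dhh 1 1 r\<bar> \<le> \<kappa> 1 1 * Fdd 1 (fst r)" if "r \<in> quad" for r
  proof -
    have "0 \<le> \<kappa> 1 1 * Fdd 1 (fst r) - dhh 1 1 r"
    proof (rule ext_quad[OF _ _ that])
      show "continuous_on quad (\<lambda>r. \<kappa> 1 1 * Fdd 1 (fst r) - dhh 1 1 r)" using cF1 cH by (auto intro!: continuous_intros)
      fix a b :: real assume "0 < a" "0 < b"
      then show "0 \<le> \<kappa> 1 1 * Fdd 1 (fst (a, b)) - dhh 1 1 (a, b)" using i11[of a b] by (simp add: abs_le_iff)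
    qed
    moreover have "0 \<le> \<kappa> 1 1 * Fdd 1 (fst r) + dhh 1 1 r"
    proof (rule ext_quad[OF _ _ that])
      show "continuous_on quad (\<lambda>r. \<kappa> 1 1 * Fdd 1 (fst r) + dhh 1 1 r)" using cF1 cH by (auto intro!: continuous_intros)
      fix a b :: real assume "0 < a" "0 < b"
      then show "0 \<le> \<kappa> 1 1 * Fdd 1 (fst (a, b)) + dhh 1 1 (a, b)" using i11[of a b] by (simp add: abs_le_iff)
    qed
    ultimately show ?thesis by linarith
  qed
  have q22: "\<bar>dhh 2 2 r\<bar> \<le> \<kappa> 2 2 * Fdd 2 (snd r)" if "r \<in> quad" for r
  proof -
    have "0 \<le> \<kappa> 2 2 * Fdd 2 (snd r) - dhh 2 2 r"
    proof (rule ext_quad[OF _ _ that])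
      show "continuous_on quad (\<lambda>r. \<kappa> 2 2 * Fdd 2 (snd r) - dhh 2 2 r)" using cF2 cH by (auto intro!: continuous_intros)
      fix a b :: real assume "0 < a" "0 < b"
      then show "0 \<le> \<kappa> 2 2 * Fdd 2 (snd (a, b)) - dhh 2 2 (a, b)" using i22[of a b] by (simp add: abs_le_iff)
    qed
    moreover have "0 \<le> \<kappa> 2 2 * Fdd 2 (snd r) + dhh 2 2 r"
    proof (rule ext_quad[OF _ _ that])
      show "continuous_on quad (\<lambda>r. \<kappa> 2 2 * Fdd 2 (snd r) + dhh 2 2 r)" using cF2 cH by (auto intro!: continuous_intros)
      fix a b :: real assume "0 < a" "0 < b"
      then show "0 \<le> \<kappa> 2 2 * Fdd 2 (snd (a, b)) + dhh 2 2 (a, b)" using i22[of a b] by (simp add: abs_le_iff)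
    qed
    ultimately show ?thesis by linarith
  qed
  have qsym: "dhh 2 1 r = dhh 1 2 r" if "r \<in> quad" for r
  proof -
    have "0 \<le> - (dhh 1 2 r - dhh 2 1 r)\<^sup>2"
      by (rule ext_quad[OF _ _ that]) (use cH sym_int in \<open>auto intro!: continuous_intros\<close>)
    then show ?thesis by simp
  qed
  have q12: "(dhh 1 2 r)\<^sup>2 \<le> \<kappa> 1 2 * \<kappa> 2 1 * Fdd 1 (fst r) * Fdd 2 (snd r)" if "r \<in> quad" for r
  proof -
    have "0 \<le> \<kappa> 1 2 * \<kappa> 2 1 * Fdd 1 (fst r) * Fdd 2 (snd r) - (dhh 1 2 r)\<^sup>2"
    proof (rule ext_quad[OF _ _ that])
      show "continuous_on quad (\<lambda>r. \<kappa> 1 2 * \<kappa> 2 1 * Fdd 1 (fst r) * Fdd 2 (snd r) - (dhh 1 2 r)\<^sup>2)"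
        using cF1 cF2 cH by (auto intro!: continuous_intros)
      fix a b :: real assume ab: "0 < a" "0 < b"
      have "(dhh 1 2 (a, b))\<^sup>2 = \<bar>dhh 1 2 (a, b)\<bar> * \<bar>dhh 2 1 (a, b)\<bar>"
        using sym_int[OF ab] by (simp add: power2_eq_square abs_mult[symmetric])
      then show "0 \<le> \<kappa> 1 2 * \<kappa> 2 1 * Fdd 1 (fst (a, b)) * Fdd 2 (snd (a, b)) - (dhh 1 2 (a, b))\<^sup>2"
        using i12[OF ab] by simp
    qed
    then show ?thesis by simp
  qed

  define K4 where "K4 = \<kappa> 1 1 + \<kappa> 2 2 + \<kappa> 1 2 + \<kappa> 2 1"
  have K4: "K4 > 0" using kappa_pos by (auto simp: K4_def intro!: add_pos_pos)
  define \<epsilon>0 where "\<epsilon>0 = 1 / (4 * K4)"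
  have \<epsilon>0: "\<epsilon>0 > 0" using K4 by (simp add: \<epsilon>0_def)
  have small: "\<epsilon> * (4 * K4) \<le> 1" if "0 < \<epsilon>" "\<epsilon> \<le> \<epsilon>0" for \<epsilon>
  proof -
    have "\<epsilon> * (4 * K4) \<le> \<epsilon>0 * (4 * K4)" using that K4 by (intro mult_right_mono) auto
    also have "\<dots> = 1" using K4 by (simp add: \<epsilon>0_def)
    finally show ?thesis .
  qed
  have Fddq1: "0 \<le> Fdd 1 (fst r)" if "r \<in> quad" for r by (rule O1.fdd_nonneg[OF quad_fst[OF that]])
  have Fddq2: "0 \<le> Fdd 2 (snd r)" if "r \<in> quad" for r by (rule O2.fdd_nonneg[OF quad_snd[OF that]])
  have Fw1: "(F 1 has_real_derivative Fd 1 x) (at x within {0..})" if "0 \<le> x" for x using O1.f_deriv that by blast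
  have Fw2: "(F 2 has_real_derivative Fd 2 x) (at x within {0..})" if "0 \<le> x" for x using O2.f_deriv that by blast
  have Fdw1: "(Fd 1 has_real_derivative Fdd 1 x) (at x within {0..})" if "0 \<le> x" for x using O1.fd_deriv that by blast
  have Fdw2: "(Fd 2 has_real_derivative Fdd 2 x) (at x within {0..})" if "0 \<le> x" for x using O2.fd_deriv that by blast
  have hw: "(h has_derivative (\<lambda>v. dh 1 r * fst v + dh 2 r * snd v)) (at r within quad)" if "r \<in> quad" for r
    using h_deriv that by blast
  have hdw1: "(dh 1 has_derivative (\<lambda>v. dhh 1 1 r * fst v + dhh 1 2 r * snd v)) (at r within quad)" if "r \<in> quad" for r
    using hd_deriv that by blast
  have hdw2: "(dh 2 has_derivative (\<lambda>v. dhh 2 1 r * fst v + dhh 2 2 r * snd v)) (at r within quad)" if "r \<in> quad" for r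
    using hd_deriv that by blast
  have conv: "convex_on quad (\<lambda>r. F 1 (fst r) + F 2 (snd r) + 2 * \<epsilon> * h r)"
    if e: "0 < \<epsilon>" "\<epsilon> \<le> \<epsilon>0" for \<epsilon>
  proof -
    have Pd: "\<forall>r\<in>quad. ((\<lambda>r. F 1 (fst r) + F 2 (snd r) + 2 * \<epsilon> * h r) has_derivative
        (\<lambda>w. (Fd 1 (fst r) + 2 * \<epsilon> * dh 1 r) * fst w + (Fd 2 (snd r) + 2 * \<epsilon> * dh 2 r) * snd w)) (at r within quad)"
    proof
      fix r assume r: "r \<in> quad"
      have a: "((\<lambda>r. F 1 (fst r)) has_derivative (\<lambda>w. Fd 1 (fst r) * fst w)) (at r within quad)"
        by (rule fst_deriv[OF Fw1[OF quad_fst[OF r]] r])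
      have b: "((\<lambda>r. F 2 (snd r)) has_derivative (\<lambda>w. Fd 2 (snd r) * snd w)) (at r within quad)"
        by (rule snd_deriv[OF Fw2[OF quad_snd[OF r]] r])
      have c: "((\<lambda>r. 2 * \<epsilon> * h r) has_derivative (\<lambda>w. 2 * \<epsilon> * (dh 1 r * fst w + dh 2 r * snd w))) (at r within quad)"
        by (rule has_derivative_mult_right[OF hw[OF r]])
      show "((\<lambda>r. F 1 (fst r) + F 2 (snd r) + 2 * \<epsilon> * h r) has_derivative
        (\<lambda>w. (Fd 1 (fst r) + 2 * \<epsilon> * dh 1 r) * fst w + (Fd 2 (snd r) + 2 * \<epsilon> * dh 2 r) * snd w)) (at r within quad)"
        using has_derivative_add[OF has_derivative_add[OF a b] c]
        by (rule has_derivative_eq_rhs) (auto simp: fun_eq_iff algebra_simps)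
    qed
    have G1d: "\<forall>r\<in>quad. ((\<lambda>r. Fd 1 (fst r) + 2 * \<epsilon> * dh 1 r) has_derivative
        (\<lambda>w. (Fdd 1 (fst r) + 2 * \<epsilon> * dhh 1 1 r) * fst w + (2 * \<epsilon> * dhh 1 2 r) * snd w)) (at r within quad)"
    proof
      fix r assume r: "r \<in> quad"
      have a: "((\<lambda>r. Fd 1 (fst r)) has_derivative (\<lambda>w. Fdd 1 (fst r) * fst w)) (at r within quad)"
        by (rule fst_deriv[OF Fdw1[OF quad_fst[OF r]] r])
      have c: "((\<lambda>r. 2 * \<epsilon> * dh 1 r) has_derivative (\<lambda>w. 2 * \<epsilon> * (dhh 1 1 r * fst w + dhh 1 2 r * snd w))) (at r within quad)"
        by (rule has_derivative_mult_right[OF hdw1[OF r]])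
      show "((\<lambda>r. Fd 1 (fst r) + 2 * \<epsilon> * dh 1 r) has_derivative
        (\<lambda>w. (Fdd 1 (fst r) + 2 * \<epsilon> * dhh 1 1 r) * fst w + (2 * \<epsilon> * dhh 1 2 r) * snd w)) (at r within quad)"
        using has_derivative_add[OF a c]
        by (rule has_derivative_eq_rhs) (auto simp: fun_eq_iff algebra_simps)
    qed
    have G2d: "\<forall>r\<in>quad. ((\<lambda>r. Fd 2 (snd r) + 2 * \<epsilon> * dh 2 r) has_derivative
        (\<lambda>w. (2 * \<epsilon> * dhh 2 1 r) * fst w + (Fdd 2 (snd r) + 2 * \<epsilon> * dhh 2 2 r) * snd w)) (at r within quad)"
    proof
      fix r assume r: "r \<in> quad"
      have a: "((\<lambda>r. Fd 2 (snd r)) has_derivative (\<lambda>w. Fdd 2 (snd r) * snd w)) (at r within quad)"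
        by (rule snd_deriv[OF Fdw2[OF quad_snd[OF r]] r])
      have c: "((\<lambda>r. 2 * \<epsilon> * dh 2 r) has_derivative (\<lambda>w. 2 * \<epsilon> * (dhh 2 1 r * fst w + dhh 2 2 r * snd w))) (at r within quad)"
        by (rule has_derivative_mult_right[OF hdw2[OF r]])
      show "((\<lambda>r. Fd 2 (snd r) + 2 * \<epsilon> * dh 2 r) has_derivative
        (\<lambda>w. (2 * \<epsilon> * dhh 2 1 r) * fst w + (Fdd 2 (snd r) + 2 * \<epsilon> * dhh 2 2 r) * snd w)) (at r within quad)"
        using has_derivative_add[OF a c]
        by (rule has_derivative_eq_rhs) (auto simp: fun_eq_iff algebra_simps)
    qed
    have Q: "\<forall>r\<in>quad. \<forall>v1 v2. 0 \<le> v1 * ((Fdd 1 (fst r) + 2 * \<epsilon> * dhh 1 1 r) * v1 + (2 * \<epsilon> * dhh 1 2 r) * v2)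
        + v2 * ((2 * \<epsilon> * dhh 2 1 r) * v1 + (Fdd 2 (snd r) + 2 * \<epsilon> * dhh 2 2 r) * v2)"
    proof (intro ballI allI)
      fix r v1 v2 assume r: "r \<in> quad"
      have "0 \<le> v1 * ((Fdd 1 (fst r) + 2 * \<epsilon> * dhh 1 1 r) * v1 + 2 * \<epsilon> * dhh 1 2 r * v2)
        + v2 * (2 * \<epsilon> * dhh 1 2 r * v1 + (Fdd 2 (snd r) + 2 * \<epsilon> * dhh 2 2 r) * v2)"
        by (rule Qlemma[OF Fddq1[OF r] Fddq2[OF r] q11[OF r] q22[OF r] q12[OF r]])
           (use kappa_pos e small[OF e] in \<open>auto simp: K4_def\<close>)
      then show "0 \<le> v1 * ((Fdd 1 (fst r) + 2 * \<epsilon> * dhh 1 1 r) * v1 + (2 * \<epsilon> * dhh 1 2 r) * v2)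
        + v2 * ((2 * \<epsilon> * dhh 2 1 r) * v1 + (Fdd 2 (snd r) + 2 * \<epsilon> * dhh 2 2 r) * v2)"
        using qsym[OF r] by simp
    qed
    show ?thesis by (rule convex_hess[OF Pd G1d G2d Q])
  qed
  have Gstrict: "F 1 (fst ((1 - t) *\<^sub>R x + t *\<^sub>R y)) + F 2 (snd ((1 - t) *\<^sub>R x + t *\<^sub>R y))
      < (1 - t) * (F 1 (fst x) + F 2 (snd x)) + t * (F 1 (fst y) + F 2 (snd y))"
    if xy: "x \<in> quad" "y \<in> quad" "x \<noteq> y" and t: "0 < t" "t < 1" for x y :: "real \<times> real" and t :: real
  proof -
    have nn: "0 \<le> fst x" "0 \<le> snd x" "0 \<le> fst y" "0 \<le> snd y" using xy by (auto simp: quad_def)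
    have c1: "F 1 ((1 - t) * fst x + t * fst y) \<le> (1 - t) * F 1 (fst x) + t * F 1 (fst y)"
      using O1.f_chord nn t by auto
    have c2: "F 2 ((1 - t) * snd x + t * snd y) \<le> (1 - t) * F 2 (snd x) + t * F 2 (snd y)"
      using O2.f_chord nn t by auto
    have "fst x \<noteq> fst y \<or> snd x \<noteq> snd y" using xy(3) by (auto simp: prod_eq_iff)
    then have "F 1 ((1 - t) * fst x + t * fst y) + F 2 ((1 - t) * snd x + t * snd y)
        < (1 - t) * F 1 (fst x) + t * F 1 (fst y) + ((1 - t) * F 2 (snd x) + t * F 2 (snd y))"
    proof
      assume "fst x \<noteq> fst y"
      then have "F 1 ((1 - t) * fst x + t * fst y) < (1 - t) * F 1 (fst x) + t * F 1 (fst y)"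
        using O1.f_strict_chord nn t by auto
      then show ?thesis using c2 by linarith
    next
      assume "snd x \<noteq> snd y"
      then have "F 2 ((1 - t) * snd x + t * snd y) < (1 - t) * F 2 (snd x) + t * F 2 (snd y)"
        using O2.f_strict_chord nn t by auto
      then show ?thesis using c1 by linarith
    qed
    moreover have "fst ((1 - t) *\<^sub>R x + t *\<^sub>R y) = (1 - t) * fst x + t * fst y"
        "snd ((1 - t) *\<^sub>R x + t *\<^sub>R y) = (1 - t) * snd x + t * snd y" by simp_all
    moreover have "(1 - t) * (F 1 (fst x) + F 2 (snd x)) + t * (F 1 (fst y) + F 2 (snd y))
        = (1 - t) * F 1 (fst x) + t * F 1 (fst y) + ((1 - t) * F 2 (snd x) + t * F 2 (snd y))"
      by (simp add: distrib_left)
    ultimately show ?thesis by simp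
  qed
  have sconv: "strict_convex_on quad (\<lambda>r. F 1 (fst r) + F 2 (snd r) + 2 * \<epsilon> * h r)"
    if e: "0 < \<epsilon>" "\<epsilon> < \<epsilon>0" for \<epsilon>
    unfolding strict_convex_on_def
  proof (intro conjI convex_quad ballI allI impI)
    fix x y :: "real \<times> real" and t :: real
    assume xy: "x \<in> quad" "y \<in> quad" and tt: "x \<noteq> y \<and> 0 < t \<and> t < 1"
    define z where "z = (1 - t) *\<^sub>R x + t *\<^sub>R y"
    define G where "G r = F 1 (fst r) + F 2 (snd r)" for r :: "real \<times> real"
    define P where "P r = F 1 (fst r) + F 2 (snd r) + 2 * \<epsilon>0 * h r" for r :: "real \<times> real"
    define s where "s = \<epsilon> / \<epsilon>0"
    have s: "0 < s" "s < 1" using e \<epsilon>0 by (auto simp: s_def)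
    have dec: "F 1 (fst r) + F 2 (snd r) + 2 * \<epsilon> * h r = (1 - s) * G r + s * P r" for r
    proof -
      have "s * \<epsilon>0 = \<epsilon>" using \<epsilon>0 by (simp add: s_def)
      then show ?thesis by (simp add: G_def P_def algebra_simps)
    qed
    have Gs: "G z < (1 - t) * G x + t * G y" using Gstrict[OF xy] tt by (simp add: G_def z_def)
    have cP: "convex_on quad P" unfolding P_def using conv[of \<epsilon>0] \<epsilon>0 by simp
    have Ps: "P z \<le> (1 - t) * P x + t * P y"
      unfolding z_def by (rule convex_onD[OF cP]) (use xy tt in auto)
    have "(1 - s) * G z < (1 - s) * ((1 - t) * G x + t * G y)" using Gs s by (intro mult_strict_left_mono) auto
    moreover have "s * P z \<le> s * ((1 - t) * P x + t * P y)" using Ps s by (intro mult_left_mono) auto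
    moreover have "(1 - s) * ((1 - t) * G x + t * G y) + s * ((1 - t) * P x + t * P y)
        = (1 - t) * ((1 - s) * G x + s * P x) + t * ((1 - s) * G y + s * P y)"
      by (simp add: algebra_simps)
    ultimately have "(1 - s) * G z + s * P z < (1 - t) * ((1 - s) * G x + s * P x) + t * ((1 - s) * G y + s * P y)"
      by linarith
    then show "F 1 (fst ((1 - t) *\<^sub>R x + t *\<^sub>R y)) + F 2 (snd ((1 - t) *\<^sub>R x + t *\<^sub>R y)) +
        2 * \<epsilon> * h ((1 - t) *\<^sub>R x + t *\<^sub>R y)
        < (1 - t) * (F 1 (fst x) + F 2 (snd x) + 2 * \<epsilon> * h x) + t * (F 1 (fst y) + F 2 (snd y) + 2 * \<epsilon> * h y)"
      unfolding dec z_def[symmetric] .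
  qed

  have hb1: "\<bar>h r\<bar> \<le> \<kappa> 1 1 * F 1 (fst r)" if r: "r \<in> quad" for r
  proof -
    obtain a b where ab: "r = (a, b)" by (cases r)
    have a: "0 \<le> a" and b: "0 \<le> b" using quad_fst[OF r] quad_snd[OF r] ab by auto
    have dh0: "((\<lambda>s. h (s, b)) has_real_derivative dh 1 (s, b)) (at s within {0..})" if "0 \<le> s" for s
      by (rule p1w[OF hw[OF inq[OF that b]] b])
    have dh1: "((\<lambda>s. dh 1 (s, b)) has_real_derivative dhh 1 1 (s, b)) (at s within {0..})" if "0 \<le> s" for s
      by (rule p1w[OF hdw1[OF inq[OF that b]] b])
    have v: "h (0, b) = 0" "dh 1 (0, b) = 0" using h_vanish[rule_format, OF inq[of 0 b]] b by simp_all
    have "0 \<le> \<kappa> 1 1 * F 1 a + sg * h (a, b)" if sg: "sg = 1 \<or> sg = -1" for sg :: real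
    proof (rule twice0[where \<psi> = "\<lambda>s. \<kappa> 1 1 * F 1 s + sg * h (s, b)" and r = a
          and \<psi>' = "\<lambda>s. \<kappa> 1 1 * Fd 1 s + sg * dh 1 (s, b)"
          and \<psi>'' = "\<lambda>s. \<kappa> 1 1 * Fdd 1 s + sg * dhh 1 1 (s, b)"])
      show "\<forall>x\<ge>0. ((\<lambda>s. \<kappa> 1 1 * F 1 s + sg * h (s, b)) has_real_derivative
              \<kappa> 1 1 * Fd 1 x + sg * dh 1 (x, b)) (at x within {0..})"
        using Fw1 dh0 by (intro allI impI DERIV_add DERIV_cmult) auto
      show "\<forall>x\<ge>0. ((\<lambda>s. \<kappa> 1 1 * Fd 1 s + sg * dh 1 (s, b)) has_real_derivative
              \<kappa> 1 1 * Fdd 1 x + sg * dhh 1 1 (x, b)) (at x within {0..})"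
        using Fdw1 dh1 by (intro allI impI DERIV_add DERIV_cmult) auto
      show "\<forall>x>0. 0 \<le> \<kappa> 1 1 * Fdd 1 x + sg * dhh 1 1 (x, b)"
      proof (intro allI impI)
        fix x :: real assume "0 < x"
        then have "\<bar>dhh 1 1 (x, b)\<bar> \<le> \<kappa> 1 1 * Fdd 1 x" using q11[OF inq[of x b]] b by auto
        then show "0 \<le> \<kappa> 1 1 * Fdd 1 x + sg * dhh 1 1 (x, b)" using sg by (auto simp: abs_le_iff)
      qed
      show "\<kappa> 1 1 * F 1 0 + sg * h (0, b) = 0" "\<kappa> 1 1 * Fd 1 0 + sg * dh 1 (0, b) = 0"
        using v O1.f0 O1.fd0 by simp_all
      show "0 \<le> a" by (rule a)
    qed
    from this[of 1] this[of "-1"] show ?thesis using ab by (simp add: abs_le_iff)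
  qed
  have hb2: "\<bar>h r\<bar> \<le> \<kappa> 2 2 * F 2 (snd r)" if r: "r \<in> quad" for r
  proof -
    obtain a b where ab: "r = (a, b)" by (cases r)
    have a: "0 \<le> a" and b: "0 \<le> b" using quad_fst[OF r] quad_snd[OF r] ab by auto
    have dh0: "((\<lambda>s. h (a, s)) has_real_derivative dh 2 (a, s)) (at s within {0..})" if "0 \<le> s" for s
      by (rule p2w[OF hw[OF inq[OF a that]] a])
    have dh1: "((\<lambda>s. dh 2 (a, s)) has_real_derivative dhh 2 2 (a, s)) (at s within {0..})" if "0 \<le> s" for s
      by (rule p2w[OF hdw2[OF inq[OF a that]] a])
    have v: "h (a, 0) = 0" "dh 2 (a, 0) = 0" using h_vanish[rule_format, OF inq[of a 0]] a by simp_all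
    have "0 \<le> \<kappa> 2 2 * F 2 b + sg * h (a, b)" if sg: "sg = 1 \<or> sg = -1" for sg :: real
    proof (rule twice0[where \<psi> = "\<lambda>s. \<kappa> 2 2 * F 2 s + sg * h (a, s)" and r = b
          and \<psi>' = "\<lambda>s. \<kappa> 2 2 * Fd 2 s + sg * dh 2 (a, s)"
          and \<psi>'' = "\<lambda>s. \<kappa> 2 2 * Fdd 2 s + sg * dhh 2 2 (a, s)"])
      show "\<forall>x\<ge>0. ((\<lambda>s. \<kappa> 2 2 * F 2 s + sg * h (a, s)) has_real_derivative
              \<kappa> 2 2 * Fd 2 x + sg * dh 2 (a, x)) (at x within {0..})"
        using Fw2 dh0 by (intro allI impI DERIV_add DERIV_cmult) auto
      show "\<forall>x\<ge>0. ((\<lambda>s. \<kappa> 2 2 * Fd 2 s + sg * dh 2 (a, s)) has_real_derivative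
              \<kappa> 2 2 * Fdd 2 x + sg * dhh 2 2 (a, x)) (at x within {0..})"
        using Fdw2 dh1 by (intro allI impI DERIV_add DERIV_cmult) auto
      show "\<forall>x>0. 0 \<le> \<kappa> 2 2 * Fdd 2 x + sg * dhh 2 2 (a, x)"
      proof (intro allI impI)
        fix x :: real assume "0 < x"
        then have "\<bar>dhh 2 2 (a, x)\<bar> \<le> \<kappa> 2 2 * Fdd 2 x" using q22[OF inq[of a x]] a by auto
        then show "0 \<le> \<kappa> 2 2 * Fdd 2 x + sg * dhh 2 2 (a, x)" using sg by (auto simp: abs_le_iff)
      qed
      show "\<kappa> 2 2 * F 2 0 + sg * h (a, 0) = 0" "\<kappa> 2 2 * Fd 2 0 + sg * dh 2 (a, 0) = 0"
        using v O2.f0 O2.fd0 by simp_all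
      show "0 \<le> b" by (rule b)
    qed
    from this[of 1] this[of "-1"] show ?thesis using ab by (simp add: abs_le_iff)
  qed
  have P12: "\<exists>\<epsilon>0>0.
        (\<forall>\<epsilon>. 0 < \<epsilon> \<and> \<epsilon> \<le> \<epsilon>0 \<longrightarrow>
           convex_on quad (\<lambda>r. F 1 (fst r) + F 2 (snd r) + 2 * \<epsilon> * h r) \<and>
           (\<epsilon> < \<epsilon>0 \<longrightarrow> strict_convex_on quad (\<lambda>r. F 1 (fst r) + F 2 (snd r) + 2 * \<epsilon> * h r)))
      \<and> (\<forall>r\<in>quad. \<forall>\<epsilon>. 0 < \<epsilon> \<and> \<epsilon> \<le> \<epsilon>0 \<longrightarrow>
           F 1 (fst r) / 2 + F 2 (snd r) / 2 \<le> F 1 (fst r) + F 2 (snd r) + \<epsilon> * h r \<and>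
           F 1 (fst r) + F 2 (snd r) + \<epsilon> * h r
             \<le> (1 + \<epsilon> / 2 * \<kappa> 1 1) * F 1 (fst r) + (1 + \<epsilon> / 2 * \<kappa> 2 2) * F 2 (snd r))"
  proof (intro exI[of _ \<epsilon>0] conjI allI impI ballI)
    show "0 < \<epsilon>0" by (rule \<epsilon>0)
    fix \<epsilon> :: real
    {
      assume e: "0 < \<epsilon> \<and> \<epsilon> \<le> \<epsilon>0"
      then show "convex_on quad (\<lambda>r. F 1 (fst r) + F 2 (snd r) + 2 * \<epsilon> * h r)" using conv by auto
      assume "\<epsilon> < \<epsilon>0"
      then show "strict_convex_on quad (\<lambda>r. F 1 (fst r) + F 2 (snd r) + 2 * \<epsilon> * h r)" using sconv e by auto
    }
    fix r assume r: "r \<in> quad" and e: "0 < \<epsilon> \<and> \<epsilon> \<le> \<epsilon>0"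
    have F1n: "0 \<le> F 1 (fst r)" using O1.f_nonneg quad_fst[OF r] by blast
    have F2n: "0 \<le> F 2 (snd r)" using O2.f_nonneg quad_snd[OF r] by blast
    have "\<epsilon> * (4 * K4) \<le> 1" using small e by auto
    moreover have kp: "0 < \<kappa> 1 1" "0 < \<kappa> 2 2" "0 < \<kappa> 1 2" "0 < \<kappa> 2 1" using kappa_pos by auto
    then have "\<kappa> 1 1 \<le> K4" unfolding K4_def by linarith
    then have "\<epsilon> * \<kappa> 1 1 \<le> \<epsilon> * K4" using e by (intro mult_left_mono) auto
    moreover have "\<epsilon> * (4 * K4) = 4 * (\<epsilon> * K4)" by simp
    ultimately have ek: "\<epsilon> * \<kappa> 1 1 \<le> 1/4" by linarith
    have "\<epsilon> * \<bar>h r\<bar> \<le> \<epsilon> * (\<kappa> 1 1 * F 1 (fst r))" using hb1[OF r] e by (intro mult_left_mono) auto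
    also have "\<dots> = (\<epsilon> * \<kappa> 1 1) * F 1 (fst r)" by simp
    also have "\<dots> \<le> (1/4) * F 1 (fst r)" using ek F1n by (intro mult_right_mono) auto
    finally have "\<epsilon> * \<bar>h r\<bar> \<le> (1/4) * F 1 (fst r)" .
    moreover have "\<epsilon> * (- \<bar>h r\<bar>) \<le> \<epsilon> * h r" using e by (intro mult_left_mono) auto
    then have "- (\<epsilon> * \<bar>h r\<bar>) \<le> \<epsilon> * h r" by simp
    ultimately show "F 1 (fst r) / 2 + F 2 (snd r) / 2 \<le> F 1 (fst r) + F 2 (snd r) + \<epsilon> * h r"
      using F1n F2n by linarith
    have "h r \<le> \<kappa> 1 1 * F 1 (fst r)" "h r \<le> \<kappa> 2 2 * F 2 (snd r)" using hb1[OF r] hb2[OF r] by auto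
    then have "2 * h r \<le> \<kappa> 1 1 * F 1 (fst r) + \<kappa> 2 2 * F 2 (snd r)" by linarith
    then have "h r \<le> (\<kappa> 1 1 * F 1 (fst r) + \<kappa> 2 2 * F 2 (snd r)) / 2" by (simp add: field_simps)
    then have "\<epsilon> * h r \<le> \<epsilon> * ((\<kappa> 1 1 * F 1 (fst r) + \<kappa> 2 2 * F 2 (snd r)) / 2)"
      using e by (intro mult_left_mono) auto
    then show "F 1 (fst r) + F 2 (snd r) + \<epsilon> * h r
             \<le> (1 + \<epsilon> / 2 * \<kappa> 1 1) * F 1 (fst r) + (1 + \<epsilon> / 2 * \<kappa> 2 2) * F 2 (snd r)"
      by (simp add: algebra_simps)
  qed

  have kp: "0 < \<kappa> 1 1" "0 < \<kappa> 2 2" "0 < \<kappa> 1 2" "0 < \<kappa> 2 1" using kappa_pos by auto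
  have P5: "\<forall>H>0. \<exists>\<beta>H>0. \<forall>rb\<in>quad. \<forall>r\<in>quad. \<forall>i\<in>{1,2}. \<forall>j\<in>{1,2}.
        fst rb \<le> H \<and> snd rb \<le> H \<longrightarrow>
        max (fst r) (snd r) * (thd j i (Fd 1 (fst r), Fd 2 (snd r)) - thd j i (Fd 1 (fst rb), Fd 2 (snd rb)))\<^sup>2
          \<le> \<beta>H * (bregman (F 1) (Fd 1) (fst r) (fst rb) + bregman (F 2) (Fd 2) (snd r) (snd rb))"
  proof (intro allI impI)
    fix H :: real assume H: "H > 0"
    obtain K1 where K1: "K1 \<ge> H" "\<forall>r rb. K1 < r \<and> 0 \<le> rb \<and> rb \<le> H \<longrightarrow> r \<le> bregman (F 1) (Fd 1) r rb"
      using O1.far[of H] H by auto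
    obtain K2 where K2: "K2 \<ge> H" "\<forall>r rb. K2 < r \<and> 0 \<le> rb \<and> rb \<le> H \<longrightarrow> r \<le> bregman (F 2) (Fd 2) r rb"
      using O2.far[of H] H by auto
    define K where "K = max K1 K2"
    have K: "K \<ge> H" "K \<ge> 0" "K1 \<le> K" "K2 \<le> K" using K1 K2 H by (auto simp: K_def)
    obtain B1 where B1: "B1 > 0" "\<forall>r rb. 0 \<le> r \<and> r \<le> K \<and> 0 \<le> rb \<and> rb \<le> K \<longrightarrow>
        (Fd 1 r - Fd 1 rb)\<^sup>2 \<le> B1 * bregman (F 1) (Fd 1) r rb" using O1.coco[OF K(2)] by auto
    obtain B2 where B2: "B2 > 0" "\<forall>r rb. 0 \<le> r \<and> r \<le> K \<and> 0 \<le> rb \<and> rb \<le> K \<longrightarrow>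
        (Fd 2 r - Fd 2 rb)\<^sup>2 \<le> B2 * bregman (F 2) (Fd 2) r rb" using O2.coco[OF K(2)] by auto
    define B where "B = max B1 B2"
    have B: "B > 0" "B1 \<le> B" "B2 \<le> B" using B1 B2 by (auto simp: B_def)
    define U where "U = max (Fd 1 K) (Fd 2 K)"
    define X where "X = {0..U} \<times> {0..U}"
    have Xq: "X \<subseteq> quad" by (auto simp: X_def quad_def)
    have cX: "compact X" unfolding X_def by (intro compact_Times compact_Icc)
    have lip: "\<exists>L. L-lipschitz_on X (thd j i)" if ij: "i \<in> {1,2}" "j \<in> {1,2}" for i j
    proof -
      have ll: "local_lipschitz {0::real} X (\<lambda>_. thd j i)"
      proof (rule local_lipschitzI)
        fix t :: real and x assume "t \<in> {0}" "x \<in> X"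
        then have "x \<in> quad" using Xq by auto
        then obtain e L where eL: "e > 0" "L-lipschitz_on (cball x e \<inter> quad) (thd j i)"
          using thd_loclip ij by blast
        have "L-lipschitz_on (cball x e \<inter> X) (thd j i)"
          by (rule lipschitz_on_subset[OF eL(2)]) (use Xq in auto)
        then show "\<exists>u>0. \<exists>L. \<forall>t\<in>cball t u \<inter> {0}. L-lipschitz_on (cball x u \<inter> X) (thd j i)"
          using eL(1) by blast
      qed
      obtain L where "\<And>t. t \<in> {0::real} \<Longrightarrow> L-lipschitz_on X (thd j i)"
        using local_lipschitz_compact_implies_lipschitz[OF ll cX compact_sing] by auto
      then show ?thesis by blast
    qed
    obtain L11 where L11: "L11-lipschitz_on X (thd 1 1)" using lip[of 1 1] by auto
    obtain L12 where L12: "L12-lipschitz_on X (thd 1 2)" using lip[of 2 1] by auto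
    obtain L21 where L21: "L21-lipschitz_on X (thd 2 1)" using lip[of 1 2] by auto
    obtain L22 where L22: "L22-lipschitz_on X (thd 2 2)" using lip[of 2 2] by auto
    define L where "L = max (max L11 L12) (max L21 L22)"
    have L: "L-lipschitz_on X (thd j i)" if "i \<in> {1,2}" "j \<in> {1,2}" for i j
    proof -
      have "L11 \<le> L" "L12 \<le> L" "L21 \<le> L" "L22 \<le> L" by (auto simp: L_def)
      then show ?thesis using that lipschitz_on_le[OF L11] lipschitz_on_le[OF L12]
          lipschitz_on_le[OF L21] lipschitz_on_le[OF L22] by auto
    qed
    have L0: "0 \<le> L" using lipschitz_on_nonneg[OF L[of 1 1]] by simp
    define \<kappa>m where "\<kappa>m = \<kappa> 1 1 + \<kappa> 1 2 + \<kappa> 2 1 + \<kappa> 2 2"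
    have \<kappa>b: "\<bar>thd j i u\<bar> \<le> \<kappa>m" if "i \<in> {1,2}" "j \<in> {1,2}" "u \<in> quad" for i j u
    proof -
      have "\<kappa> j i \<le> \<kappa>m" using that kp unfolding \<kappa>m_def by auto
      then show ?thesis using thd_le_kappa[OF that] by linarith
    qed
    define \<beta>H where "\<beta>H = K * L\<^sup>2 * B + 4 * \<kappa>m\<^sup>2 + 1"
    have KLB: "0 \<le> K * L\<^sup>2 * B" using K B by simp
    show "\<exists>\<beta>H>0. \<forall>rb\<in>quad. \<forall>r\<in>quad. \<forall>i\<in>{1,2}. \<forall>j\<in>{1,2}.
        fst rb \<le> H \<and> snd rb \<le> H \<longrightarrow>
        max (fst r) (snd r) * (thd j i (Fd 1 (fst r), Fd 2 (snd r)) - thd j i (Fd 1 (fst rb), Fd 2 (snd rb)))\<^sup>2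
          \<le> \<beta>H * (bregman (F 1) (Fd 1) (fst r) (fst rb) + bregman (F 2) (Fd 2) (snd r) (snd rb))"
    proof (intro exI[of _ \<beta>H] conjI ballI impI)
      show "0 < \<beta>H" using KLB by (simp add: \<beta>H_def add_nonneg_pos)
      fix rb r :: "real \<times> real" and i j :: nat
      assume rb: "rb \<in> quad" and r: "r \<in> quad" and ij: "i \<in> {1,2}" "j \<in> {1,2}"
        and rbH: "fst rb \<le> H \<and> snd rb \<le> H"
      obtain r1 r2 where rr: "r = (r1, r2)" by (cases r)
      obtain b1 b2 where bb: "rb = (b1, b2)" by (cases rb)
      have r12: "0 \<le> r1" "0 \<le> r2" using quad_fst[OF r] quad_snd[OF r] rr by auto
      have b12: "0 \<le> b1" "0 \<le> b2" "b1 \<le> H" "b2 \<le> H" using quad_fst[OF rb] quad_snd[OF rb] bb rbH by auto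
      define d1 where "d1 = bregman (F 1) (Fd 1) r1 b1"
      define d2 where "d2 = bregman (F 2) (Fd 2) r2 b2"
      have d: "0 \<le> d1" "0 \<le> d2" using O1.breg_nonneg O2.breg_nonneg r12 b12 by (auto simp: d1_def d2_def)
      define u where "u = (Fd 1 r1, Fd 2 r2)"
      define ub where "ub = (Fd 1 b1, Fd 2 b2)"
      have uq': "u \<in> quad" "ub \<in> quad" using uq r12 b12 by (auto simp: u_def ub_def)
      define D where "D = (thd j i u - thd j i ub)\<^sup>2"
      have D0: "0 \<le> D" by (simp add: D_def)
      have mx: "0 \<le> max r1 r2" using r12 by auto
      have main: "max r1 r2 * D \<le> \<beta>H * (d1 + d2)"
      proof (cases "r1 \<le> K \<and> r2 \<le> K")
        case True
        have inX: "u \<in> X" "ub \<in> X"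
        proof -
          have "Fd 1 r1 \<le> Fd 1 K" "Fd 2 r2 \<le> Fd 2 K" "Fd 1 b1 \<le> Fd 1 K" "Fd 2 b2 \<le> Fd 2 K"
            using O1.fd_mono O2.fd_mono r12 b12 True K by auto
          moreover have "0 \<le> Fd 1 r1" "0 \<le> Fd 2 r2" "0 \<le> Fd 1 b1" "0 \<le> Fd 2 b2"
            using O1.fd_nonneg O2.fd_nonneg r12 b12 by auto
          ultimately show "u \<in> X" "ub \<in> X" by (auto simp: X_def u_def ub_def U_def)
        qed
        have "dist (thd j i u) (thd j i ub) \<le> L * dist u ub" by (rule lipschitz_onD[OF L[OF ij] inX])
        then have a: "\<bar>thd j i u - thd j i ub\<bar> \<le> L * dist u ub" by (simp add: dist_real_def)
        have "D = \<bar>thd j i u - thd j i ub\<bar>\<^sup>2" by (simp add: D_def)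
        also have "\<dots> \<le> (L * dist u ub)\<^sup>2" using a by (intro power_mono) auto
        also have "\<dots> = L\<^sup>2 * (dist u ub)\<^sup>2" by (simp add: power_mult_distrib)
        finally have Dle: "D \<le> L\<^sup>2 * (dist u ub)\<^sup>2" .
        have "(dist u ub)\<^sup>2 = (Fd 1 r1 - Fd 1 b1)\<^sup>2 + (Fd 2 r2 - Fd 2 b2)\<^sup>2"
          by (simp add: u_def ub_def dist_Pair_Pair dist_real_def)
        also have "\<dots> \<le> B1 * d1 + B2 * d2"
          using B1(2) B2(2) r12 b12 True K by (intro add_mono) (auto simp: d1_def d2_def)
        also have "\<dots> \<le> B * d1 + B * d2" using B d by (intro add_mono mult_right_mono) auto
        finally have "(dist u ub)\<^sup>2 \<le> B * (d1 + d2)" by (simp add: distrib_left)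
        then have "L\<^sup>2 * (dist u ub)\<^sup>2 \<le> L\<^sup>2 * (B * (d1 + d2))" by (intro mult_left_mono) auto
        with Dle have "D \<le> L\<^sup>2 * (B * (d1 + d2))" by linarith
        then have "D \<le> L\<^sup>2 * B * (d1 + d2)" by (simp add: algebra_simps)
        moreover have "max r1 r2 \<le> K" using True by auto
        ultimately have "max r1 r2 * D \<le> K * (L\<^sup>2 * B * (d1 + d2))"
          using mx D0 d B by (intro mult_mono) auto
        also have "\<dots> = (K * L\<^sup>2 * B) * (d1 + d2)" by (simp add: algebra_simps)
        also have "\<dots> \<le> \<beta>H * (d1 + d2)" using d unfolding \<beta>H_def by (intro mult_right_mono) auto
        finally show ?thesis .
      next
        case False
        have mxd: "max r1 r2 \<le> d1 + d2"
        proof (cases "r2 \<le> r1")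
          case True
          then have "K1 < r1" using False K by auto
          then have "r1 \<le> d1" using K1(2) b12 by (auto simp: d1_def)
          then show ?thesis using True d by auto
        next
          case False2: False
          then have "K2 < r2" using False K by auto
          then have "r2 \<le> d2" using K2(2) b12 by (auto simp: d2_def)
          then show ?thesis using False2 d by auto
        qed
        have "\<bar>thd j i u - thd j i ub\<bar> \<le> \<bar>thd j i u\<bar> + \<bar>thd j i ub\<bar>" by (rule abs_triangle_ineq4)
        also have "\<dots> \<le> 2 * \<kappa>m" using \<kappa>b[OF ij uq'(1)] \<kappa>b[OF ij uq'(2)] by linarith
        finally have "\<bar>thd j i u - thd j i ub\<bar>\<^sup>2 \<le> (2 * \<kappa>m)\<^sup>2" by (intro power_mono) auto
        then have D4: "D \<le> 4 * \<kappa>m\<^sup>2" by (simp add: D_def power_mult_distrib)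
        have "max r1 r2 * D \<le> (d1 + d2) * (4 * \<kappa>m\<^sup>2)" using mxd D4 mx D0 by (intro mult_mono) auto
        also have "\<dots> \<le> (d1 + d2) * \<beta>H" using d KLB unfolding \<beta>H_def by (intro mult_left_mono) auto
        finally show ?thesis by (simp add: mult.commute)
      qed
      then show "max (fst r) (snd r) * (thd j i (Fd 1 (fst r), Fd 2 (snd r)) - thd j i (Fd 1 (fst rb), Fd 2 (snd rb)))\<^sup>2
          \<le> \<beta>H * (bregman (F 1) (Fd 1) (fst r) (fst rb) + bregman (F 2) (Fd 2) (snd r) (snd rb))"
        using rr bb by (simp add: D_def u_def ub_def d1_def d2_def)
    qed
  qed
  show ?thesis using P12 P3 P4 P5 by blast
qed


end
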